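(* For every bipartite quantum channel $\mathcal{N}_{A'B'\to AB}$, $$E_{\kappa,A}(\mathcal{N})\le E_\kappa(\mathcal{N}),$$ where $E_{\kappa,A}(\mathcal{N})=\sup_{\rho_{L_AA'B'L_B}}\big[E_\kappa(L_AA;BL_B)_{\mathcal{N}(\rho)}-E_\kappa(L_AA';B'L_B)_\rho\big]$, the supremum being over all states $\rho_{L_AA'B'L_B}$ with $L_A,L_B$ finite-dimensional of arbitrary size.
   Context: $T_X$ is partial transpose on $X$. For a bipartite state $\rho_{CD}$, $E_\kappa(C;D)_\rho=\log W_\kappa(C;D)_\rho$ with $W_\kappa(C;D)_\rho=\inf\{\operatorname{Tr}S_{CD}: S_{CD}\ge0,\ -T_D(S_{CD})\le T_D(\rho_{CD})\le T_D(S_{CD})\}$. For a bipartite channel $\mathcal{N}_{A'B'\to AB}$ with Choi operator $J^{\mathcal{N}}_{L'_AABL'_B}=\mathcal{N}(|\Upsilon\rangle\langle\Upsilon|_{L'_AA'}\otimes|\Upsilon\rangle\langle\Upsilon|_{B'L'_B})$ ($|\Upsilon\rangle_{XY}=\sum_i|i\rangle_X|i\rangle_Y$, $L'_A\simeq A'$, $L'_B\simeq B'$), $E_\kappa(\mathcal{N})=\log\inf\{\|\operatorname{Tr}_{AB}Q_{L'_AABL'_B}\|_\infty: Q\ge0,\ -T_{BL'_B}(Q)\le T_{BL'_B}(J^{\mathcal{N}})\le T_{BL'_B}(Q)\}$. *)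

theory Defs
  imports Complex_Main "Jordan_Normal_Form.Matrix" "HOL-Library.Extended_Real"
begin

text \<open>Composite indices follow the Kronecker (tensor) convention: for systems
  X (dim dx) and Y (dim dy) the basis vector |x>|y> has index x*dy + y; for more systems this
  is nested, e.g. |w>|x>|y>|z> has index ((w*dx + x)*dy + y)*dz + z.\<close>

definition tr :: "complex mat \<Rightarrow> complex" where
  "tr M = (\<Sum>i<dim_row M. M $$ (i,i))"

definition psd :: "complex mat \<Rightarrow> bool" where
  "psd M \<longleftrightarrow> M \<in> carrier_mat (dim_row M) (dim_row M) \<and>
     (\<forall>v \<in> carrier_vec (dim_row M).
        Im ((M *\<^sub>v v) \<bullet>c v) = 0 \<and> 0 \<le> Re ((M *\<^sub>v v) \<bullet>c v))"

definition loewner_le :: "complex mat \<Rightarrow> complex mat \<Rightarrow> bool" where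
  "loewner_le X Y \<longleftrightarrow> dim_row X = dim_row Y \<and> dim_col X = dim_col Y \<and> psd (Y - X)"

definition is_state :: "nat \<Rightarrow> complex mat \<Rightarrow> bool" where
  "is_state d \<rho> \<longleftrightarrow> \<rho> \<in> carrier_mat d d \<and> psd \<rho> \<and> tr \<rho> = 1"

text \<open>Partial transpose on the second factor D (dim dd) of a bipartite operator on C \<otimes> D.\<close>
definition ptrans2 :: "nat \<Rightarrow> nat \<Rightarrow> complex mat \<Rightarrow> complex mat" where
  "ptrans2 dc dd M = mat (dc*dd) (dc*dd)
     (\<lambda>(r,c). M $$ ((r div dd)*dd + c mod dd, (c div dd)*dd + r mod dd))"

text \<open>Partial trace over the middle system M (dim dm) of an operator on L \<otimes> M \<otimes> R.\<close>
definition ptrace_mid :: "nat \<Rightarrow> nat \<Rightarrow> nat \<Rightarrow> complex mat \<Rightarrow> complex mat" where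
  "ptrace_mid dl dm dr X = mat (dl*dr) (dl*dr)
     (\<lambda>(i,j). \<Sum>k<dm. X $$ (((i div dr)*dm + k)*dr + i mod dr, ((j div dr)*dm + k)*dr + j mod dr))"

definition vnorm :: "complex vec \<Rightarrow> real" where
  "vnorm v = sqrt (\<Sum>i<dim_vec v. (cmod (v $ i))\<^sup>2)"

definition opnorm :: "complex mat \<Rightarrow> real" where
  "opnorm M = Sup {vnorm (M *\<^sub>v v) | v. v \<in> carrier_vec (dim_col M) \<and> vnorm v \<le> 1}"

text \<open>(id_L \<otimes> N \<otimes> id_R)(X) for X on L \<otimes> D_in \<otimes> R (dims dl, din, dr), where N maps
  din x din matrices to dout x dout matrices. Defined blockwise:
  X = \<Sum> |a c><b e| \<otimes> X_(a c),(b e)  is sent to  \<Sum> |a c><b e| \<otimes> N(X_(a c),(b e)),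
  which agrees with id \<otimes> N \<otimes> id for linear N.\<close>
definition ext_id :: "nat \<Rightarrow> nat \<Rightarrow> nat \<Rightarrow> nat \<Rightarrow> (complex mat \<Rightarrow> complex mat) \<Rightarrow> complex mat \<Rightarrow> complex mat" where
  "ext_id dl dr din dout N X = mat (dl*dout*dr) (dl*dout*dr)
     (\<lambda>(r,c). let a = r div (dout*dr); i = (r div dr) mod dout; ce = r mod dr;
                  b = c div (dout*dr); j = (c div dr) mod dout; e = c mod dr
              in N (mat din din (\<lambda>(p,q). X $$ ((a*din + p)*dr + ce, (b*din + q)*dr + e))) $$ (i,j))"

definition is_bipartite_channel ::
  "nat \<Rightarrow> nat \<Rightarrow> nat \<Rightarrow> nat \<Rightarrow> (complex mat \<Rightarrow> complex mat) \<Rightarrow> bool" where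
  "is_bipartite_channel dA' dB' dA dB N \<longleftrightarrow>
     0 < dA' \<and> 0 < dB' \<and> 0 < dA \<and> 0 < dB \<and>
     (\<forall>X \<in> carrier_mat (dA'*dB') (dA'*dB'). N X \<in> carrier_mat (dA*dB) (dA*dB)) \<and>
     (\<forall>X \<in> carrier_mat (dA'*dB') (dA'*dB'). \<forall>Y \<in> carrier_mat (dA'*dB') (dA'*dB').
        \<forall>a b. N (a \<cdot>\<^sub>m X + b \<cdot>\<^sub>m Y) = a \<cdot>\<^sub>m N X + b \<cdot>\<^sub>m N Y) \<and>
     (\<forall>X \<in> carrier_mat (dA'*dB') (dA'*dB'). tr (N X) = tr X) \<and>
     (\<forall>k. \<forall>X \<in> carrier_mat (k*(dA'*dB')) (k*(dA'*dB')).
        psd X \<longrightarrow> psd (ext_id k 1 (dA'*dB') (dA*dB) N X))"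

definition W_kappa :: "nat \<Rightarrow> nat \<Rightarrow> complex mat \<Rightarrow> real" where
  "W_kappa dc dd \<rho> = Inf {Re (tr S) | S. S \<in> carrier_mat (dc*dd) (dc*dd) \<and> psd S \<and>
       loewner_le (- ptrans2 dc dd S) (ptrans2 dc dd \<rho>) \<and>
       loewner_le (ptrans2 dc dd \<rho>) (ptrans2 dc dd S)}"

definition E_kappa_state :: "nat \<Rightarrow> nat \<Rightarrow> complex mat \<Rightarrow> real" where
  "E_kappa_state dc dd \<rho> = log 2 (W_kappa dc dd \<rho>)"

text \<open>Unnormalized maximally entangled operator |Upsilon><Upsilon| on L'_A A' \<otimes> B' L'_B,
  with L'_A \<simeq> A' (dim dA') and L'_B \<simeq> B' (dim dB'), ordered L'_A A' B' L'_B.\<close>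
definition choi_input :: "nat \<Rightarrow> nat \<Rightarrow> complex mat" where
  "choi_input dA' dB' = mat (dA'*dA'*dB'*dB') (dA'*dA'*dB'*dB')
     (\<lambda>(r,c). let l = r div (dA'*dB'*dB'); a = (r div (dB'*dB')) mod dA';
                  b = (r div dB') mod dB'; m = r mod dB';
                  l2 = c div (dA'*dB'*dB'); a2 = (c div (dB'*dB')) mod dA';
                  b2 = (c div dB') mod dB'; m2 = c mod dB'
              in if l = a \<and> l2 = a2 \<and> b = m \<and> b2 = m2 then 1 else 0)"

text \<open>Choi operator J^N on L'_A A B L'_B.\<close>
definition choi :: "nat \<Rightarrow> nat \<Rightarrow> nat \<Rightarrow> nat \<Rightarrow> (complex mat \<Rightarrow> complex mat) \<Rightarrow> complex mat" where
  "choi dA' dB' dA dB N = ext_id dA' dB' (dA'*dB') (dA*dB) N (choi_input dA' dB')"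

text \<open>E_kappa of a bipartite channel; partial transpose on B L'_B is the partial transpose of
  the second factor in the split (L'_A A) | (B L'_B).\<close>
definition E_kappa_channel :: "nat \<Rightarrow> nat \<Rightarrow> nat \<Rightarrow> nat \<Rightarrow> (complex mat \<Rightarrow> complex mat) \<Rightarrow> real" where
  "E_kappa_channel dA' dB' dA dB N = log 2 (Inf
     {opnorm (ptrace_mid dA' (dA*dB) dB' Q) | Q.
        Q \<in> carrier_mat (dA'*dA*dB*dB') (dA'*dA*dB*dB') \<and> psd Q \<and>
        loewner_le (- ptrans2 (dA'*dA) (dB*dB') Q) (ptrans2 (dA'*dA) (dB*dB') (choi dA' dB' dA dB N)) \<and>
        loewner_le (ptrans2 (dA'*dA) (dB*dB') (choi dA' dB' dA dB N)) (ptrans2 (dA'*dA) (dB*dB') Q)})"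

definition E_kappa_A_channel :: "nat \<Rightarrow> nat \<Rightarrow> nat \<Rightarrow> nat \<Rightarrow> (complex mat \<Rightarrow> complex mat) \<Rightarrow> ereal" where
  "E_kappa_A_channel dA' dB' dA dB N =
     (SUP p \<in> {(lA, lB, \<rho>) | lA lB \<rho>. is_state (lA*dA'*dB'*lB) \<rho>}.
        (case p of (lA, lB, \<rho>) \<Rightarrow>
          ereal (E_kappa_state (lA*dA) (dB*lB) (ext_id lA lB (dA'*dB') (dA*dB) N \<rho>)
                 - E_kappa_state (lA*dA') (dB'*lB) \<rho>)))"

end

theory Submission
  imports Defs "HOL-Analysis.L2_Norm"
begin


definition qf :: "'i set \<Rightarrow> ('i \<Rightarrow> 'i \<Rightarrow> complex) \<Rightarrow> ('i \<Rightarrow> complex) \<Rightarrow> complex" where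
  "qf I K v = (\<Sum>i\<in>I. \<Sum>j\<in>I. cnj (v i) * K i j * v j)"

definition kpsd :: "'i set \<Rightarrow> ('i \<Rightarrow> 'i \<Rightarrow> complex) \<Rightarrow> bool" where
  "kpsd I K \<longleftrightarrow> (\<forall>v. 0 \<le> qf I K v)"

lemma qf_cong: "(\<And>i j. i\<in>I \<Longrightarrow> j\<in>I \<Longrightarrow> K i j = K' i j) \<Longrightarrow> qf I K v = qf I K' v"
  unfolding qf_def by (intro sum.cong refl) auto

lemma kpsd_cong: "(\<And>i j. i\<in>I \<Longrightarrow> j\<in>I \<Longrightarrow> K i j = K' i j) \<Longrightarrow> kpsd I K = kpsd I K'"
  unfolding kpsd_def using qf_cong by metis

lemma qf_add: "qf I (\<lambda>i j. K i j + L i j) v = qf I K v + qf I L v"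
  unfolding qf_def by (simp add: sum.distrib algebra_simps)

lemma qf_scale: "qf I (\<lambda>i j. c * K i j) v = c * qf I K v"
  unfolding qf_def by (simp add: sum_distrib_left algebra_simps)

lemma kpsd_add: "kpsd I K \<Longrightarrow> kpsd I L \<Longrightarrow> kpsd I (\<lambda>i j. K i j + L i j)"
  unfolding kpsd_def qf_add by (simp add: add_nonneg_nonneg)

lemma kpsd_scale: "0 \<le> c \<Longrightarrow> kpsd I K \<Longrightarrow> kpsd I (\<lambda>i j. c * K i j)"
  unfolding kpsd_def qf_scale by (simp add: mult_nonneg_nonneg)

lemma cnj_mult_self_nonneg: "0 \<le> (w::complex) * cnj w"
  by (simp add: complex_mult_cnj less_eq_complex_def)

lemma kpsd_rank_sum:
  assumes "finite I" "finite T"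
    and "\<And>i j. i\<in>I \<Longrightarrow> j\<in>I \<Longrightarrow> K i j = (\<Sum>t\<in>T. z t i * cnj (z t j))"
  shows "kpsd I K"
  unfolding kpsd_def
proof
  fix v
  have "qf I K v = (\<Sum>i\<in>I. \<Sum>j\<in>I. \<Sum>t\<in>T. cnj (v i) * z t i * (cnj (z t j) * v j))"
    unfolding qf_def using assms(3)
    by (intro sum.cong refl) (simp add: sum_distrib_left sum_distrib_right mult.assoc)
  also have "\<dots> = (\<Sum>i\<in>I. \<Sum>t\<in>T. \<Sum>j\<in>I. cnj (v i) * z t i * (cnj (z t j) * v j))"
    by (intro sum.cong refl sum.swap)
  also have "\<dots> = (\<Sum>t\<in>T. \<Sum>i\<in>I. \<Sum>j\<in>I. cnj (v i) * z t i * (cnj (z t j) * v j))"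
    by (rule sum.swap)
  also have "\<dots> = (\<Sum>t\<in>T. (\<Sum>i\<in>I. cnj (v i) * z t i) * (\<Sum>j\<in>I. cnj (z t j) * v j))"
    by (simp only: sum_product)
  also have "\<dots> = (\<Sum>t\<in>T. (\<Sum>i\<in>I. cnj (v i) * z t i) * cnj (\<Sum>j\<in>I. cnj (v j) * z t j))"
    by (simp add: mult.commute)
  also have "0 \<le> \<dots>"
    by (intro sum_nonneg cnj_mult_self_nonneg)
  finally show "0 \<le> qf I K v" .
qed

lemma qf_delta:
  assumes "finite I" "i \<in> I"
  shows "qf I K (\<lambda>x. if x = i then a else 0) = cnj a * K i i * a"
proof -
  have e: "\<And>x y. cnj (if x = i then a else 0) * K x y * (if y = i then a else 0) =
     (if x = i then (if y = i then cnj a * K i i * a else 0) else 0)" by simp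
  have f: "(\<Sum>x\<in>I. \<Sum>y\<in>I. if x = i then (if y = i then cnj a * K i i * a else 0) else 0)
     = (\<Sum>x\<in>I. if x = i then (\<Sum>y\<in>I. if y = i then cnj a * K i i * a else 0) else 0)"
    by (intro sum.cong) auto
  show ?thesis using assms unfolding qf_def e f by (simp add: sum.delta')
qed


definition bf :: "'i set \<Rightarrow> ('i \<Rightarrow> 'i \<Rightarrow> complex) \<Rightarrow> ('i \<Rightarrow> complex) \<Rightarrow> ('i \<Rightarrow> complex) \<Rightarrow> complex" where
  "bf I K u v = (\<Sum>i\<in>I. \<Sum>j\<in>I. cnj (u i) * K i j * v j)"

definition dlt :: "'i \<Rightarrow> complex \<Rightarrow> 'i \<Rightarrow> complex" where
  "dlt k a = (\<lambda>x. if x = k then a else 0)"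

lemma qf_bf: "qf I K v = bf I K v v" unfolding qf_def bf_def ..

lemma bf_add_left: "bf I K (\<lambda>x. u x + u' x) v = bf I K u v + bf I K u' v"
  unfolding bf_def by (simp add: sum.distrib algebra_simps)

lemma bf_add_right: "bf I K u (\<lambda>x. v x + v' x) = bf I K u v + bf I K u v'"
  unfolding bf_def by (simp add: sum.distrib algebra_simps)

lemma bf_dl_right: "finite I \<Longrightarrow> k \<in> I \<Longrightarrow> bf I K u (dlt k a) = (\<Sum>i\<in>I. cnj (u i) * K i k) * a"
  unfolding bf_def dlt_def by (simp add: sum_distrib_right if_distrib sum.delta' cong: if_cong)

lemma bf_dl_left: "finite I \<Longrightarrow> k \<in> I \<Longrightarrow> bf I K (dlt k a) v = cnj a * (\<Sum>j\<in>I. K k j * v j)"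
proof -
  assume a: "finite I" "k \<in> I"
  have "bf I K (dlt k a) v = (\<Sum>i\<in>I. if i = k then (\<Sum>j\<in>I. cnj a * K k j * v j) else 0)"
    unfolding bf_def dlt_def by (intro sum.cong) auto
  also have "\<dots> = cnj a * (\<Sum>j\<in>I. K k j * v j)" using a by (simp add: sum.delta' sum_distrib_left mult.assoc)
  finally show ?thesis .
qed

lemma bf_dl_dl: "finite I \<Longrightarrow> k \<in> I \<Longrightarrow> l \<in> I \<Longrightarrow> bf I K (dlt k a) (dlt l b) = cnj a * K k l * b"
  by (simp add: bf_dl_left) (simp add: dlt_def if_distrib sum.delta' cong: if_cong)

lemma qf_two:
  assumes "finite I" "i \<in> I" "j \<in> I"
  shows "qf I K (\<lambda>x. dlt i a x + dlt j b x) =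
    cnj a * K i i * a + cnj a * K i j * b + cnj b * K j i * a + cnj b * K j j * b"
  unfolding qf_bf bf_add_left bf_add_right using assms by (simp add: bf_dl_dl)

lemma qf_dl: "finite I \<Longrightarrow> i \<in> I \<Longrightarrow> qf I K (dlt i a) = cnj a * K i i * a"
  unfolding qf_bf by (simp add: bf_dl_dl)

lemma nonneg_complex_iff: "0 \<le> (z::complex) \<longleftrightarrow> Im z = 0 \<and> 0 \<le> Re z"
  by (auto simp: less_eq_complex_def)

lemma kpsd_diag: "kpsd I K \<Longrightarrow> finite I \<Longrightarrow> i \<in> I \<Longrightarrow> 0 \<le> K i i"
  using qf_dl[of I i K 1] unfolding kpsd_def by (metis complex_cnj_one mult_1 mult_1_right)

lemma kpsd_herm:
  assumes K: "kpsd I K" and f: "finite I" and i: "i \<in> I" and j: "j \<in> I"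
  shows "K j i = cnj (K i j)"
proof -
  have di: "Im (K i i) = 0" and dj: "Im (K j j) = 0" using kpsd_diag[OF K f] i j nonneg_complex_iff by blast+
  have "0 \<le> qf I K (\<lambda>x. dlt i 1 x + dlt j 1 x)" using K kpsd_def by blast
  hence 1: "Im (K i j + K j i) = 0" using qf_two[OF f i j, of K 1 1] di dj by (simp add: nonneg_complex_iff)
  have "0 \<le> qf I K (\<lambda>x. dlt i 1 x + dlt j \<i> x)" using K kpsd_def by blast
  hence 2: "Re (K i j) = Re (K j i)" using qf_two[OF f i j, of K 1 \<i>] di dj by (simp add: nonneg_complex_iff)
  show ?thesis using 1 2 by (simp add: complex_eq_iff)
qed


lemma kpsd_zero_diag:
  assumes K: "kpsd I K" and f: "finite I" and i: "i \<in> I" and j: "j \<in> I"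
    and z: "K i i = 0" "K j j = 0"
  shows "K i j = 0"
proof (cases "i = j")
  case True thus ?thesis using z by simp
next
  case False
  let ?t = "- cnj (K i j)"
  have h: "K j i = cnj (K i j)" using kpsd_herm[OF K f i j] .
  have "0 \<le> qf I K (\<lambda>x. dlt i 1 x + dlt j ?t x)" using K kpsd_def by blast
  also have "qf I K (\<lambda>x. dlt i 1 x + dlt j ?t x) = - 2 * (K i j * cnj (K i j))"
    using qf_two[OF f i j, of K 1 ?t] z h by simp
  finally have "K i j * cnj (K i j) \<le> 0" by (simp add: less_eq_complex_def)
  moreover have "0 \<le> K i j * cnj (K i j)" by (rule cnj_mult_self_nonneg)
  ultimately have "K i j * cnj (K i j) = 0" by (rule order_antisym)
  thus ?thesis by simp
qed

lemma qf_diff: "qf I (\<lambda>i j. K i j - L i j) v = qf I K v - qf I L v"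
  unfolding qf_def by (simp add: sum_subtractf algebra_simps)

lemma qf_rank1: "qf I (\<lambda>i j. a i * cnj (a j)) v = (\<Sum>i\<in>I. cnj (v i) * a i) * cnj (\<Sum>i\<in>I. cnj (v i) * a i)"
  unfolding qf_def by (simp add: sum_product mult.commute mult.left_commute)

lemma kpsd_schur_step:
  assumes K: "kpsd I K" and f: "finite I" and k: "k \<in> I" and nz: "K k k \<noteq> 0"
  defines "d \<equiv> Re (K k k)"
  defines "a \<equiv> (\<lambda>i. K i k / complex_of_real (sqrt d))"
  shows "kpsd I (\<lambda>i j. K i j - a i * cnj (a j))"
  unfolding kpsd_def
proof
  fix v
  have kk: "K k k = complex_of_real d" using kpsd_diag[OF K f k] unfolding d_def
    by (simp add: complex_eq_iff less_eq_complex_def)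
  have dpos: "d > 0" using kpsd_diag[OF K f k] nz unfolding d_def
    by (auto simp: complex_eq_iff less_eq_complex_def)
  define s where "s = (\<Sum>j\<in>I. K k j * v j)"
  define t where "t = - s / complex_of_real d"
  have cs: "(\<Sum>i\<in>I. cnj (v i) * K i k) = cnj s"
    unfolding s_def using kpsd_herm[OF K f k] by (simp add: mult.commute)
  have "0 \<le> qf I K (\<lambda>x. v x + dlt k t x)" using K kpsd_def by blast
  also have "qf I K (\<lambda>x. v x + dlt k t x) = qf I K v + cnj s * t + cnj t * s + cnj t * K k k * t"
    unfolding qf_bf bf_add_left bf_add_right bf_dl_dl[OF f k k] using f k
    by (simp add: bf_dl_right bf_dl_left bf_dl_dl cs s_def[symmetric])
  also have "\<dots> = qf I K v - cnj s * s / complex_of_real d"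
    unfolding t_def kk using dpos by (simp add: field_simps)
  also have "\<dots> = qf I (\<lambda>i j. K i j - a i * cnj (a j)) v"
  proof -
    have "(\<Sum>i\<in>I. cnj (v i) * a i) = cnj s / complex_of_real (sqrt d)"
      unfolding a_def cs[symmetric] by (simp add: sum_divide_distrib)
    hence "qf I (\<lambda>i j. a i * cnj (a j)) v = (cnj s / complex_of_real (sqrt d)) * cnj (cnj s / complex_of_real (sqrt d))"
      unfolding qf_rank1 by simp
    also have "\<dots> = cnj s * s / (complex_of_real (sqrt d) * complex_of_real (sqrt d))" by simp
    also have "complex_of_real (sqrt d) * complex_of_real (sqrt d) = complex_of_real d"
      using dpos by (simp flip: of_real_mult)
    finally have "qf I (\<lambda>i j. a i * cnj (a j)) v = cnj s * s / complex_of_real d" .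
    thus ?thesis unfolding qf_diff by simp
  qed
  finally show "0 \<le> qf I (\<lambda>i j. K i j - a i * cnj (a j)) v" .
qed


lemma kpsd_decomp_aux:
  assumes "finite I"
  shows "card {i\<in>I. K i i \<noteq> 0} = m \<Longrightarrow> kpsd I K \<Longrightarrow>
    \<exists>(n::nat) a. \<forall>i\<in>I. \<forall>j\<in>I. K i j = (\<Sum>t<n. a t i * cnj (a t j))"
proof (induction m arbitrary: K rule: less_induct)
  case (less m K)
  show ?case
  proof (cases "\<exists>k\<in>I. K k k \<noteq> 0")
    case False
    hence "\<forall>i\<in>I. \<forall>j\<in>I. K i j = 0"
      using kpsd_zero_diag[OF less.prems(2) assms] by auto
    thus ?thesis by (intro exI[of _ 0] exI[of _ "\<lambda>t i. 0"]) simp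
  next
    case True
    then obtain k where k: "k \<in> I" "K k k \<noteq> 0" by blast
    define d where "d = Re (K k k)"
    define a where "a = (\<lambda>i. K i k / complex_of_real (sqrt d))"
    define K' where "K' = (\<lambda>i j. K i j - a i * cnj (a j))"
    have K': "kpsd I K'" unfolding K'_def a_def d_def by (rule kpsd_schur_step[OF less.prems(2) assms k])
    have kk: "K k k = complex_of_real d" using kpsd_diag[OF less.prems(2) assms k(1)] unfolding d_def
      by (simp add: complex_eq_iff less_eq_complex_def)
    have dpos: "d > 0" using kpsd_diag[OF less.prems(2) assms k(1)] k(2) unfolding d_def
      by (auto simp: complex_eq_iff less_eq_complex_def)
    have K'kk: "K' k k = 0"
    proof -
      have "a k * cnj (a k) = K k k * cnj (K k k) / (complex_of_real (sqrt d) * complex_of_real (sqrt d))"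
        unfolding a_def by simp
      also have "complex_of_real (sqrt d) * complex_of_real (sqrt d) = complex_of_real d"
        using dpos by (simp flip: of_real_mult)
      finally show ?thesis unfolding K'_def kk using dpos by simp
    qed
    have sub: "{i\<in>I. K' i i \<noteq> 0} \<subseteq> {i\<in>I. K i i \<noteq> 0} - {k}"
    proof
      fix i assume i: "i \<in> {i\<in>I. K' i i \<noteq> 0}"
      have "K i i \<noteq> 0"
      proof
        assume z: "K i i = 0"
        have "0 \<le> K' i i" using kpsd_diag[OF K' assms] i by auto
        hence "a i * cnj (a i) \<le> 0" unfolding K'_def z by simp
        hence "a i * cnj (a i) = 0" using cnj_mult_self_nonneg[of "a i"] by (rule order_antisym)
        thus False using i z unfolding K'_def by simp
      qed
      thus "i \<in> {i\<in>I. K i i \<noteq> 0} - {k}" using i K'kk by auto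
    qed
    have "card {i\<in>I. K' i i \<noteq> 0} < m"
    proof -
      have "card {i\<in>I. K' i i \<noteq> 0} \<le> card ({i\<in>I. K i i \<noteq> 0} - {k})"
        using sub assms by (intro card_mono) auto
      also have "\<dots> < card {i\<in>I. K i i \<noteq> 0}" using k assms
        by (intro card_Diff1_less) auto
      finally show ?thesis using less.prems(1) by simp
    qed
    from less.IH[OF this refl K'] obtain n :: nat and b where
      nb: "\<forall>i\<in>I. \<forall>j\<in>I. K' i j = (\<Sum>t<n. b t i * cnj (b t j))" by blast
    define c where "c = (\<lambda>t. if t < n then b t else a)"
    have "\<forall>i\<in>I. \<forall>j\<in>I. K i j = (\<Sum>t<Suc n. c t i * cnj (c t j))"
    proof (intro ballI)
      fix i j assume "i \<in> I" "j \<in> I"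
      hence "K i j = K' i j + a i * cnj (a j)" unfolding K'_def by simp
      also have "\<dots> = (\<Sum>t<n. c t i * cnj (c t j)) + c n i * cnj (c n j)"
        using nb \<open>i \<in> I\<close> \<open>j \<in> I\<close> unfolding c_def by simp
      finally show "K i j = (\<Sum>t<Suc n. c t i * cnj (c t j))" by simp
    qed
    thus ?thesis by blast
  qed
qed

lemma kpsd_decomp:
  assumes "finite I" "kpsd I K"
  shows "\<exists>(n::nat) a. \<forall>i\<in>I. \<forall>j\<in>I. K i j = (\<Sum>t<n. a t i * cnj (a t j))"
  using kpsd_decomp_aux[OF assms(1) refl assms(2)] .


lemma kpsd_rank_sum_link:
  assumes fOb: "finite Ob" and fP: "finite P" and fI: "finite I" and fJ: "finite J"
    and X: "kpsd I X" and Y: "kpsd J Y"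
    and hX: "\<And>u c. u \<in> Ob \<Longrightarrow> c \<in> P \<Longrightarrow> fX u c \<in> I"
    and hY: "\<And>u c. u \<in> Ob \<Longrightarrow> c \<in> P \<Longrightarrow> fY u c \<in> J"
  shows "kpsd Ob (\<lambda>u u2. \<Sum>c\<in>P. \<Sum>c'\<in>P. X (fX u c) (fX u2 c') * Y (fY u c) (fY u2 c'))"
proof -
  obtain n1 :: nat and x where x: "\<forall>i\<in>I. \<forall>j\<in>I. X i j = (\<Sum>t<n1. x t i * cnj (x t j))"
    using kpsd_decomp[OF fI X] by blast
  obtain n2 :: nat and y where y: "\<forall>i\<in>J. \<forall>j\<in>J. Y i j = (\<Sum>t<n2. y t i * cnj (y t j))"
    using kpsd_decomp[OF fJ Y] by blast
  define z where "z = (\<lambda>(t1,t2) u. \<Sum>c\<in>P. x t1 (fX u c) * y t2 (fY u c))"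
  show ?thesis
  proof (rule kpsd_rank_sum[OF fOb, of "{..<n1} \<times> {..<n2}" _ z])
    fix u u2 assume u: "u \<in> Ob" and u2: "u2 \<in> Ob"
    have "(\<Sum>t\<in>{..<n1} \<times> {..<n2}. z t u * cnj (z t u2)) =
      (\<Sum>t1<n1. \<Sum>t2<n2. (\<Sum>c\<in>P. x t1 (fX u c) * y t2 (fY u c)) *
         (\<Sum>c'\<in>P. cnj (x t1 (fX u2 c')) * cnj (y t2 (fY u2 c'))))"
      unfolding sum.cartesian_product
      by (intro sum.cong refl) (auto simp: z_def cnj_sum)
    also have "\<dots> = (\<Sum>t1<n1. \<Sum>t2<n2. \<Sum>c\<in>P. \<Sum>c'\<in>P.
         (x t1 (fX u c) * cnj (x t1 (fX u2 c'))) * (y t2 (fY u c) * cnj (y t2 (fY u2 c'))))"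
      by (simp add: sum_product mult_ac)
    also have "\<dots> = (\<Sum>c\<in>P. \<Sum>c'\<in>P. (\<Sum>t1<n1. x t1 (fX u c) * cnj (x t1 (fX u2 c'))) *
         (\<Sum>t2<n2. y t2 (fY u c) * cnj (y t2 (fY u2 c'))))"
      unfolding sum_product
    proof -
      let ?f = "\<lambda>c c' t1 t2. x t1 (fX u c) * cnj (x t1 (fX u2 c')) * (y t2 (fY u c) * cnj (y t2 (fY u2 c')))"
      have "(\<Sum>c\<in>P. \<Sum>c'\<in>P. \<Sum>t1<n1. \<Sum>t2<n2. ?f c c' t1 t2) = (\<Sum>c\<in>P. \<Sum>t1<n1. \<Sum>c'\<in>P. \<Sum>t2<n2. ?f c c' t1 t2)"
        by (intro sum.cong refl sum.swap)
      also have "\<dots> = (\<Sum>t1<n1. \<Sum>c\<in>P. \<Sum>c'\<in>P. \<Sum>t2<n2. ?f c c' t1 t2)" by (rule sum.swap)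
      also have "\<dots> = (\<Sum>t1<n1. \<Sum>c\<in>P. \<Sum>t2<n2. \<Sum>c'\<in>P. ?f c c' t1 t2)"
        by (intro sum.cong refl sum.swap)
      also have "\<dots> = (\<Sum>t1<n1. \<Sum>t2<n2. \<Sum>c\<in>P. \<Sum>c'\<in>P. ?f c c' t1 t2)"
        by (intro sum.cong refl sum.swap)
      finally show "(\<Sum>t1<n1. \<Sum>t2<n2. \<Sum>c\<in>P. \<Sum>c'\<in>P. ?f c c' t1 t2) = (\<Sum>c\<in>P. \<Sum>c'\<in>P. \<Sum>t1<n1. \<Sum>t2<n2. ?f c c' t1 t2)" by simp
    qed
    also have "\<dots> = (\<Sum>c\<in>P. \<Sum>c'\<in>P. X (fX u c) (fX u2 c') * Y (fY u c) (fY u2 c'))"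
      using x y hX hY u u2 by (intro sum.cong refl) auto
    finally show "(\<Sum>c\<in>P. \<Sum>c'\<in>P. X (fX u c) (fX u2 c') * Y (fY u c) (fY u2 c')) =
       (\<Sum>t\<in>{..<n1} \<times> {..<n2}. z t u * cnj (z t u2))" by simp
  qed auto
qed


lemma qf_cong_v: "(\<And>i. i \<in> I \<Longrightarrow> v i = w i) \<Longrightarrow> qf I K v = qf I K w"
  unfolding qf_def by (intro sum.cong refl) auto

lemma quad_eq:
  assumes "M \<in> carrier_mat n n" "v \<in> carrier_vec n"
  shows "(M *\<^sub>v v) \<bullet>c v = qf {..<n} (\<lambda>i j. M $$ (i,j)) (\<lambda>i. v $ i)"
proof -
  have "(M *\<^sub>v v) \<bullet>c v = (\<Sum>i<n. (\<Sum>j<n. M $$ (i,j) * v $ j) * cnj (v $ i))"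
    using assms unfolding scalar_prod_def
    by (intro sum.cong) (auto simp: scalar_prod_def atLeast0LessThan)
  also have "\<dots> = qf {..<n} (\<lambda>i j. M $$ (i,j)) (\<lambda>i. v $ i)"
    unfolding qf_def sum_distrib_right by (intro sum.cong refl) (simp add: mult_ac)
  finally show ?thesis .
qed

lemma psd_iff_kpsd:
  assumes M: "M \<in> carrier_mat n n"
  shows "psd M \<longleftrightarrow> kpsd {..<n} (\<lambda>i j. M $$ (i,j))"
proof
  assume p: "psd M"
  show "kpsd {..<n} (\<lambda>i j. M $$ (i,j))" unfolding kpsd_def
  proof
    fix w :: "nat \<Rightarrow> complex"
    have v: "vec n w \<in> carrier_vec n" by simp
    have "qf {..<n} (\<lambda>i j. M $$ (i,j)) w = qf {..<n} (\<lambda>i j. M $$ (i,j)) (\<lambda>i. vec n w $ i)"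
      by (intro qf_cong_v) auto
    also have "\<dots> = (M *\<^sub>v vec n w) \<bullet>c vec n w" using quad_eq[OF M v] by simp
    finally show "0 \<le> qf {..<n} (\<lambda>i j. M $$ (i,j)) w" using p M v unfolding psd_def
      by (auto simp: less_eq_complex_def)
  qed
next
  assume k: "kpsd {..<n} (\<lambda>i j. M $$ (i,j))"
  show "psd M" unfolding psd_def
  proof (intro conjI ballI)
    show "M \<in> carrier_mat (dim_row M) (dim_row M)" using M by auto
  next
    fix v :: "complex vec" assume "v \<in> carrier_vec (dim_row M)"
    hence v: "v \<in> carrier_vec n" using M by auto
    have "0 \<le> (M *\<^sub>v v) \<bullet>c v" using k quad_eq[OF M v] unfolding kpsd_def by simp
    thus "Im ((M *\<^sub>v v) \<bullet>c v) = 0" "0 \<le> Re ((M *\<^sub>v v) \<bullet>c v)" by (auto simp: less_eq_complex_def)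
  qed
qed

lemma sum2_reindex:
  assumes h: "bij_betw h A B"
  shows "(\<Sum>x\<in>A. \<Sum>y\<in>A. F (h x) (h y)) = (\<Sum>i\<in>B. \<Sum>j\<in>B. F i j)"
proof -
  have "(\<Sum>x\<in>A. \<Sum>y\<in>A. F (h x) (h y)) = (\<Sum>x\<in>A. \<Sum>j\<in>B. F (h x) j)"
    by (intro sum.cong refl sum.reindex_bij_betw[OF h])
  also have "\<dots> = (\<Sum>i\<in>B. \<Sum>j\<in>B. F i j)" by (rule sum.reindex_bij_betw[OF h])
  finally show ?thesis .
qed

lemma kpsd_reindex:
  assumes h: "bij_betw h A B"
  shows "kpsd B K \<longleftrightarrow> kpsd A (\<lambda>x y. K (h x) (h y))"
proof
  assume k: "kpsd B K"
  show "kpsd A (\<lambda>x y. K (h x) (h y))" unfolding kpsd_def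
  proof
    fix v :: "_ \<Rightarrow> complex"
    define w where "w = v \<circ> inv_into A h"
    have vw: "\<And>x. x \<in> A \<Longrightarrow> v x = w (h x)"
      unfolding w_def using h by (simp add: bij_betw_def)
    have "qf A (\<lambda>x y. K (h x) (h y)) v = (\<Sum>x\<in>A. \<Sum>y\<in>A. cnj (w (h x)) * K (h x) (h y) * w (h y))"
      unfolding qf_def using vw by (intro sum.cong refl) auto
    also have "\<dots> = qf B K w" unfolding qf_def
      by (rule sum2_reindex[OF h, of "\<lambda>i j. cnj (w i) * K i j * w j"])
    finally show "0 \<le> qf A (\<lambda>x y. K (h x) (h y)) v" using k unfolding kpsd_def by simp
  qed
next
  assume k: "kpsd A (\<lambda>x y. K (h x) (h y))"
  show "kpsd B K" unfolding kpsd_def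
  proof
    fix w :: "_ \<Rightarrow> complex"
    have "qf B K w = qf A (\<lambda>x y. K (h x) (h y)) (w \<circ> h)" unfolding qf_def
      using sum2_reindex[OF h, of "\<lambda>i j. cnj (w i) * K i j * w j"] by simp
    thus "0 \<le> qf B K w" using k unfolding kpsd_def by simp
  qed
qed

definition e4 :: "nat \<Rightarrow> nat \<Rightarrow> nat \<Rightarrow> nat \<times> nat \<times> nat \<times> nat \<Rightarrow> nat" where
  "e4 n2 n3 n4 = (\<lambda>(a,b,c,d). ((a*n2+b)*n3+c)*n4+d)"

definition box4 :: "nat \<Rightarrow> nat \<Rightarrow> nat \<Rightarrow> nat \<Rightarrow> (nat \<times> nat \<times> nat \<times> nat) set" where
  "box4 n1 n2 n3 n4 = {..<n1} \<times> {..<n2} \<times> {..<n3} \<times> {..<n4}"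

lemma e2_lt: "(a::nat) < m \<Longrightarrow> b < n \<Longrightarrow> a*n+b < m*n"
proof -
  assume "a < m" "b < n"
  hence "a*n+b < (a+1)*n" by simp
  also have "\<dots> \<le> m*n" using \<open>a < m\<close> by (intro mult_right_mono) auto
  finally show ?thesis .
qed

lemma e2_div: "(b::nat) < n \<Longrightarrow> (a*n+b) div n = a" by simp
lemma e2_mod: "(b::nat) < n \<Longrightarrow> (a*n+b) mod n = b" by simp

lemma e2_inj: "(b::nat) < n \<Longrightarrow> b' < n \<Longrightarrow> a*n+b = a'*n+b' \<longleftrightarrow> a = a' \<and> b = b'"
  by (metis e2_div e2_mod)

lemma finite_box4[simp]: "finite (box4 n1 n2 n3 n4)" unfolding box4_def by simp

lemma e4_lt: "x \<in> box4 n1 n2 n3 n4 \<Longrightarrow> e4 n2 n3 n4 x < n1*n2*n3*n4"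
  unfolding box4_def e4_def by (auto intro!: e2_lt)

lemma bij_e4: "bij_betw (e4 n2 n3 n4) (box4 n1 n2 n3 n4) {..<n1*n2*n3*n4}"
  unfolding bij_betw_def
proof
  show "inj_on (e4 n2 n3 n4) (box4 n1 n2 n3 n4)"
    unfolding inj_on_def box4_def e4_def by (auto simp: e2_inj)
  show "e4 n2 n3 n4 ` box4 n1 n2 n3 n4 = {..<n1*n2*n3*n4}"
  proof
    show "e4 n2 n3 n4 ` box4 n1 n2 n3 n4 \<subseteq> {..<n1*n2*n3*n4}" using e4_lt by auto
    show "{..<n1*n2*n3*n4} \<subseteq> e4 n2 n3 n4 ` box4 n1 n2 n3 n4"
    proof
      fix r assume "r \<in> {..<n1*n2*n3*n4}"
      hence r: "r < ((n1*n2)*n3)*n4" by simp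
      define r1 where "r1 = r div n4"
      define r2 where "r2 = r1 div n3"
      define r3 where "r3 = r2 div n2"
      have n4: "n4 > 0" using r by (cases "n4 = 0") auto
      have n3: "n3 > 0" using r by (cases "n3 = 0") auto
      have n2: "n2 > 0" using r by (cases "n2 = 0") auto
      have r1: "r1 < (n1*n2)*n3" using r n4 unfolding r1_def by (simp add: less_mult_imp_div_less)
      have r2: "r2 < n1*n2" using r1 n3 unfolding r2_def by (simp add: less_mult_imp_div_less)
      have r3: "r3 < n1" using r2 n2 unfolding r3_def by (simp add: less_mult_imp_div_less)
      have "r = e4 n2 n3 n4 (r3, r2 mod n2, r1 mod n3, r mod n4)"
        unfolding e4_def r1_def r2_def r3_def by simp
      moreover have "(r3, r2 mod n2, r1 mod n3, r mod n4) \<in> box4 n1 n2 n3 n4"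
        unfolding box4_def using r3 n2 n3 n4 by auto
      ultimately show "r \<in> e4 n2 n3 n4 ` box4 n1 n2 n3 n4" by blast
    qed
  qed
qed

lemma psd_iff_kpsd4:
  assumes "M \<in> carrier_mat (n1*n2*n3*n4) (n1*n2*n3*n4)"
  shows "psd M \<longleftrightarrow> kpsd (box4 n1 n2 n3 n4) (\<lambda>x y. M $$ (e4 n2 n3 n4 x, e4 n2 n3 n4 y))"
  using psd_iff_kpsd[OF assms] kpsd_reindex[OF bij_e4] by simp


lemma d3:
  assumes "(k::nat) < n2" "m < n3"
  shows "((l*n2+k)*n3+m) div (n2*n3) = l" "((l*n2+k)*n3+m) div n3 mod n2 = k" "((l*n2+k)*n3+m) mod n3 = m"
proof -
  have "((l*n2+k)*n3+m) div n3 = l*n2+k" using assms by simp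
  moreover have "((l*n2+k)*n3+m) div (n2*n3) = ((l*n2+k)*n3+m) div n3 div n2"
    by (metis div_mult2_eq mult.commute)
  ultimately show "((l*n2+k)*n3+m) div (n2*n3) = l" "((l*n2+k)*n3+m) div n3 mod n2 = k"
    using assms by simp_all
  show "((l*n2+k)*n3+m) mod n3 = m" using assms by simp
qed

lemma e3_lt: "(a::nat) < n1 \<Longrightarrow> b < n2 \<Longrightarrow> c < n3 \<Longrightarrow> (a*n2+b)*n3+c < n1*n2*n3"
  by (intro e2_lt) auto

lemma ext_id_entry:
  assumes "l < dl" "k < dout" "m < dr" "l' < dl" "k' < dout" "m' < dr"
  shows "ext_id dl dr din dout N X $$ ((l*dout+k)*dr+m, (l'*dout+k')*dr+m') =
    N (mat din din (\<lambda>(p,q). X $$ ((l*din+p)*dr+m, (l'*din+q)*dr+m'))) $$ (k,k')"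
proof -
  have "(l*dout+k)*dr+m < dl*dout*dr" "(l'*dout+k')*dr+m' < dl*dout*dr"
    using assms by (auto intro!: e3_lt)
  thus ?thesis unfolding ext_id_def using assms by (simp add: d3 Let_def)
qed

lemma sum_e2: "(\<Sum>r<n1*n2. f r) = (\<Sum>a<n1. \<Sum>b<n2. f (a*n2+b :: nat))"
proof (induction n1)
  case 0 thus ?case by simp
next
  case (Suc n1)
  have "(\<Sum>r<Suc n1*n2. f r) = (\<Sum>r<n1*n2. f r) + (\<Sum>r\<in>{n1*n2..<n1*n2+n2}. f r)"
    by (simp add: sum.atLeastLessThan_concat[symmetric] lessThan_atLeast0 add.commute)
  also have "(\<Sum>r\<in>{n1*n2..<n1*n2+n2}. f r) = (\<Sum>b<n2. f (n1*n2+b))"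
    by (rule sum.reindex_bij_witness[of _ "\<lambda>b. n1*n2+b" "\<lambda>r. r - n1*n2"]) auto
  finally show ?case using Suc by simp
qed

lemma sum_e3: "(\<Sum>r<n1*n2*n3. f r) = (\<Sum>a<n1. \<Sum>b<n2. \<Sum>c<n3. f ((a*n2+b)*n3+c :: nat))"
  by (simp add: sum_e2)

lemma sum_e4: "(\<Sum>r<n1*n2*n3*n4. f r) = (\<Sum>x\<in>box4 n1 n2 n3 n4. f (e4 n2 n3 n4 x))"
  using sum.reindex_bij_betw[OF bij_e4, of f n2 n3 n4 n1] by simp

lemma sum_box4: "(\<Sum>x\<in>box4 n1 n2 n3 n4. f x) = (\<Sum>a<n1. \<Sum>b<n2. \<Sum>c<n3. \<Sum>d<n4. f (a,b,c,d))"
  unfolding box4_def by (simp add: sum.cartesian_product)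

lemma e4_eq3: "e4 n2 n3 n4 (a,b,c,d) = (a*(n2*n3) + (b*n3+c))*n4+d"
  unfolding e4_def by (simp add: algebra_simps)

lemma e4_eq2: "e4 n2 n3 n4 (a,b,c,d) = (a*n2+b)*(n3*n4) + (c*n4+d)"
  unfolding e4_def by (simp add: algebra_simps)


lemma ptrans2_carrier[simp]: "ptrans2 dc dd M \<in> carrier_mat (dc*dd) (dc*dd)"
  unfolding ptrans2_def by simp

lemma ptrans2_dims[simp]: "dim_row (ptrans2 dc dd M) = dc*dd" "dim_col (ptrans2 dc dd M) = dc*dd"
  unfolding ptrans2_def by simp_all

lemma box4_mem: "(a,b,c,d) \<in> box4 n1 n2 n3 n4 \<longleftrightarrow> a < n1 \<and> b < n2 \<and> c < n3 \<and> d < n4"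
  unfolding box4_def by auto

lemma N4_eq: "(n1*n2)*(n3*n4) = n1*n2*n3*(n4::nat)" by (simp add: mult.assoc)

lemma ptrans2_e4:
  assumes "(a,b,c,d) \<in> box4 n1 n2 n3 n4" "(a',b',c',d') \<in> box4 n1 n2 n3 n4"
  shows "ptrans2 (n1*n2) (n3*n4) M $$ (e4 n2 n3 n4 (a,b,c,d), e4 n2 n3 n4 (a',b',c',d')) =
         M $$ (e4 n2 n3 n4 (a,b,c',d'), e4 n2 n3 n4 (a',b',c,d))"
proof -
  from assms have r: "a < n1" "b < n2" "c < n3" "d < n4" "a' < n1" "b' < n2" "c' < n3" "d' < n4"
    by (auto simp: box4_mem)
  have l1: "(a*n2+b)*(n3*n4) + (c*n4+d) < (n1*n2)*(n3*n4)" using r by (intro e2_lt) (auto intro: e2_lt)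
  have l2: "(a'*n2+b')*(n3*n4) + (c'*n4+d') < (n1*n2)*(n3*n4)" using r by (intro e2_lt) (auto intro: e2_lt)
  have m1: "c*n4+d < n3*n4" "c'*n4+d' < n3*n4" using r by (auto intro: e2_lt)
  show ?thesis unfolding e4_eq2 ptrans2_def using l1 l2 m1 by (simp add: e2_div[OF m1(1)] e2_div[OF m1(2)] e2_mod[OF m1(1)] e2_mod[OF m1(2)])
qed

definition pt4 :: "(nat\<times>nat\<times>nat\<times>nat \<Rightarrow> nat\<times>nat\<times>nat\<times>nat \<Rightarrow> complex) \<Rightarrow> nat\<times>nat\<times>nat\<times>nat \<Rightarrow> nat\<times>nat\<times>nat\<times>nat \<Rightarrow> complex" where
  "pt4 K = (\<lambda>(a,b,c,d) (a',b',c',d'). K (a,b,c',d') (a',b',c,d))"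

definition kmat :: "complex mat \<Rightarrow> nat \<Rightarrow> nat \<Rightarrow> nat \<Rightarrow> nat\<times>nat\<times>nat\<times>nat \<Rightarrow> nat\<times>nat\<times>nat\<times>nat \<Rightarrow> complex" where
  "kmat M n2 n3 n4 = (\<lambda>x y. M $$ (e4 n2 n3 n4 x, e4 n2 n3 n4 y))"

lemma ptrans2_kmat:
  assumes "x \<in> box4 n1 n2 n3 n4" "y \<in> box4 n1 n2 n3 n4"
  shows "kmat (ptrans2 (n1*n2) (n3*n4) M) n2 n3 n4 x y = pt4 (kmat M n2 n3 n4) x y"
  using assms ptrans2_e4 unfolding kmat_def pt4_def by (cases x, cases y) auto

lemma loew_plus:
  assumes A: "A \<in> carrier_mat (n1*n2*n3*n4) (n1*n2*n3*n4)" and B: "B \<in> carrier_mat (n1*n2*n3*n4) (n1*n2*n3*n4)"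
  shows "loewner_le (- ptrans2 (n1*n2) (n3*n4) B) (ptrans2 (n1*n2) (n3*n4) A) \<longleftrightarrow>
    kpsd (box4 n1 n2 n3 n4) (\<lambda>x y. pt4 (kmat A n2 n3 n4) x y + pt4 (kmat B n2 n3 n4) x y)"
proof -
  let ?M = "ptrans2 (n1*n2) (n3*n4) A - (- ptrans2 (n1*n2) (n3*n4) B)"
  have c: "?M \<in> carrier_mat (n1*n2*n3*n4) (n1*n2*n3*n4)" using ptrans2_carrier[of "n1*n2" "n3*n4"] unfolding N4_eq by (intro minus_carrier_mat) simp
  have "loewner_le (- ptrans2 (n1*n2) (n3*n4) B) (ptrans2 (n1*n2) (n3*n4) A) \<longleftrightarrow> psd ?M"
    unfolding loewner_le_def by simp
  also have "\<dots> \<longleftrightarrow> kpsd (box4 n1 n2 n3 n4) (kmat ?M n2 n3 n4)"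
    using psd_iff_kpsd4[OF c] unfolding kmat_def by simp
  also have "\<dots> \<longleftrightarrow> kpsd (box4 n1 n2 n3 n4) (\<lambda>x y. pt4 (kmat A n2 n3 n4) x y + pt4 (kmat B n2 n3 n4) x y)"
  proof (rule kpsd_cong)
    fix x y assume x: "x \<in> box4 n1 n2 n3 n4" and y: "y \<in> box4 n1 n2 n3 n4"
    have "e4 n2 n3 n4 x < (n1*n2)*(n3*n4)" "e4 n2 n3 n4 y < (n1*n2)*(n3*n4)"
      using e4_lt[OF x] e4_lt[OF y] by (simp_all add: N4_eq)
    hence "kmat ?M n2 n3 n4 x y = kmat (ptrans2 (n1*n2) (n3*n4) A) n2 n3 n4 x y + kmat (ptrans2 (n1*n2) (n3*n4) B) n2 n3 n4 x y"
      unfolding kmat_def by simp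
    thus "kmat ?M n2 n3 n4 x y = pt4 (kmat A n2 n3 n4) x y + pt4 (kmat B n2 n3 n4) x y"
      using ptrans2_kmat[OF x y] by simp
  qed
  finally show ?thesis .
qed

lemma loew_minus:
  assumes A: "A \<in> carrier_mat (n1*n2*n3*n4) (n1*n2*n3*n4)" and B: "B \<in> carrier_mat (n1*n2*n3*n4) (n1*n2*n3*n4)"
  shows "loewner_le (ptrans2 (n1*n2) (n3*n4) A) (ptrans2 (n1*n2) (n3*n4) B) \<longleftrightarrow>
    kpsd (box4 n1 n2 n3 n4) (\<lambda>x y. pt4 (kmat B n2 n3 n4) x y - pt4 (kmat A n2 n3 n4) x y)"
proof -
  let ?M = "ptrans2 (n1*n2) (n3*n4) B - ptrans2 (n1*n2) (n3*n4) A"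
  have c: "?M \<in> carrier_mat (n1*n2*n3*n4) (n1*n2*n3*n4)" using ptrans2_carrier[of "n1*n2" "n3*n4"] unfolding N4_eq by (intro minus_carrier_mat) simp
  have "loewner_le (ptrans2 (n1*n2) (n3*n4) A) (ptrans2 (n1*n2) (n3*n4) B) \<longleftrightarrow> psd ?M"
    unfolding loewner_le_def by simp
  also have "\<dots> \<longleftrightarrow> kpsd (box4 n1 n2 n3 n4) (kmat ?M n2 n3 n4)"
    using psd_iff_kpsd4[OF c] unfolding kmat_def by simp
  also have "\<dots> \<longleftrightarrow> kpsd (box4 n1 n2 n3 n4) (\<lambda>x y. pt4 (kmat B n2 n3 n4) x y - pt4 (kmat A n2 n3 n4) x y)"
  proof (rule kpsd_cong)
    fix x y assume x: "x \<in> box4 n1 n2 n3 n4" and y: "y \<in> box4 n1 n2 n3 n4"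
    have "e4 n2 n3 n4 x < (n1*n2)*(n3*n4)" "e4 n2 n3 n4 y < (n1*n2)*(n3*n4)"
      using e4_lt[OF x] e4_lt[OF y] by (simp_all add: N4_eq)
    hence "kmat ?M n2 n3 n4 x y = kmat (ptrans2 (n1*n2) (n3*n4) B) n2 n3 n4 x y - kmat (ptrans2 (n1*n2) (n3*n4) A) n2 n3 n4 x y"
      unfolding kmat_def by simp
    thus "kmat ?M n2 n3 n4 x y = pt4 (kmat B n2 n3 n4) x y - pt4 (kmat A n2 n3 n4) x y"
      using ptrans2_kmat[OF x y] by simp
  qed
  finally show ?thesis .
qed

lemma psd_kmat:
  assumes "M \<in> carrier_mat (n1*n2*n3*n4) (n1*n2*n3*n4)"
  shows "psd M \<longleftrightarrow> kpsd (box4 n1 n2 n3 n4) (kmat M n2 n3 n4)"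
  using psd_iff_kpsd4[OF assms] unfolding kmat_def by simp


definition fXl :: "nat\<times>nat\<times>nat\<times>nat \<Rightarrow> nat\<times>nat \<Rightarrow> nat\<times>nat\<times>nat\<times>nat" where
  "fXl u c = (fst u, fst c, snd c, snd (snd (snd u)))"
definition fYl :: "nat\<times>nat\<times>nat\<times>nat \<Rightarrow> nat\<times>nat \<Rightarrow> nat\<times>nat\<times>nat\<times>nat" where
  "fYl u c = (fst c, fst (snd u), fst (snd (snd u)), snd c)"

definition lnk :: "nat \<Rightarrow> nat \<Rightarrow> (nat\<times>nat\<times>nat\<times>nat \<Rightarrow> nat\<times>nat\<times>nat\<times>nat \<Rightarrow> complex) \<Rightarrow>
   (nat\<times>nat\<times>nat\<times>nat \<Rightarrow> nat\<times>nat\<times>nat\<times>nat \<Rightarrow> complex) \<Rightarrow> nat\<times>nat\<times>nat\<times>nat \<Rightarrow> nat\<times>nat\<times>nat\<times>nat \<Rightarrow> complex" where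
  "lnk a1 b1 X Y u u2 = (\<Sum>c\<in>{..<a1}\<times>{..<b1}. \<Sum>c'\<in>{..<a1}\<times>{..<b1}.
      X (fXl u c) (fXl u2 c') * Y (fYl u c) (fYl u2 c'))"

lemma lnk_psd:
  assumes X: "kpsd (box4 lA a1 b1 lB) X" and Y: "kpsd (box4 a1 a2 b2 b1) Y"
  shows "kpsd (box4 lA a2 b2 lB) (lnk a1 b1 X Y)"
proof -
  have "kpsd (box4 lA a2 b2 lB) (\<lambda>u u2. \<Sum>c\<in>{..<a1}\<times>{..<b1}. \<Sum>c'\<in>{..<a1}\<times>{..<b1}.
      X (fXl u c) (fXl u2 c') * Y (fYl u c) (fYl u2 c'))"
    by (rule kpsd_rank_sum_link[OF _ _ _ _ X Y])
       (auto simp: box4_def fXl_def fYl_def)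
  thus ?thesis unfolding lnk_def[abs_def] .
qed

lemma sum_pair: "(\<Sum>c\<in>A\<times>B. f c) = (\<Sum>p\<in>A. \<Sum>q\<in>B. f (p,q))"
  by (subst sum.cartesian_product) simp

lemma lnk_expand: "lnk a1 b1 X Y (l,a,b,m) (l',a',b',m') =
  (\<Sum>p<a1. \<Sum>q<b1. \<Sum>p'<a1. \<Sum>q'<b1. X (l,p,q,m) (l',p',q',m') * Y (p,a,b,q) (p',a',b',q'))"
  unfolding lnk_def sum_pair by (simp add: fXl_def fYl_def)

lemma pt4_lnk: "pt4 (lnk a1 b1 X Y) u u2 = lnk a1 b1 (pt4 X) (pt4 Y) u u2"
proof -
  obtain l a b m where u: "u = (l,a,b,m)" by (cases u) auto
  obtain l' a' b' m' where u2: "u2 = (l',a',b',m')" by (cases u2) auto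
  let ?G = "\<lambda>p q p' q'. X (l,p,q,m') (l',p',q',m) * Y (p,a,b',q) (p',a',b,q')"
  have "pt4 (lnk a1 b1 X Y) u u2 = (\<Sum>p<a1. \<Sum>q<b1. \<Sum>p'<a1. \<Sum>q'<b1. ?G p q p' q')"
    unfolding u u2 pt4_def by (simp add: lnk_expand)
  also have "\<dots> = (\<Sum>p<a1. \<Sum>q<b1. \<Sum>p'<a1. \<Sum>q'<b1. ?G p q' p' q)"
  proof (rule sum.cong[OF refl])
    fix p
    have "(\<Sum>q<b1. \<Sum>p'<a1. \<Sum>q'<b1. ?G p q p' q') = (\<Sum>p'<a1. \<Sum>q<b1. \<Sum>q'<b1. ?G p q p' q')"
      by (rule sum.swap)
    also have "\<dots> = (\<Sum>p'<a1. \<Sum>q'<b1. \<Sum>q<b1. ?G p q p' q')"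
      by (intro sum.cong refl sum.swap)
    also have "\<dots> = (\<Sum>q'<b1. \<Sum>p'<a1. \<Sum>q<b1. ?G p q p' q')"
      by (rule sum.swap)
    finally show "(\<Sum>q<b1. \<Sum>p'<a1. \<Sum>q'<b1. ?G p q p' q') = (\<Sum>q<b1. \<Sum>p'<a1. \<Sum>q'<b1. ?G p q' p' q)" .
  qed
  also have "\<dots> = lnk a1 b1 (pt4 X) (pt4 Y) u u2"
    unfolding u u2 pt4_def by (simp add: lnk_expand)
  finally show ?thesis .
qed

lemma lnk_pm:
  "lnk a1 b1 (\<lambda>x y. X1 x y + X2 x y) (\<lambda>x y. Y1 x y + Y2 x y) u u2 +
   lnk a1 b1 (\<lambda>x y. X1 x y - X2 x y) (\<lambda>x y. Y1 x y - Y2 x y) u u2 =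
   2 * (lnk a1 b1 X1 Y1 u u2 + lnk a1 b1 X2 Y2 u u2)"
  unfolding lnk_def sum.distrib[symmetric] sum_distrib_left
  by (intro sum.cong refl) (simp add: algebra_simps)

lemma lnk_mp:
  "lnk a1 b1 (\<lambda>x y. X1 x y + X2 x y) (\<lambda>x y. Y1 x y - Y2 x y) u u2 +
   lnk a1 b1 (\<lambda>x y. X1 x y - X2 x y) (\<lambda>x y. Y1 x y + Y2 x y) u u2 =
   2 * (lnk a1 b1 X1 Y1 u u2 - lnk a1 b1 X2 Y2 u u2)"
  unfolding lnk_def sum.distrib[symmetric] sum_distrib_left sum_subtractf[symmetric]
  by (intro sum.cong refl) (simp add: algebra_simps)


definition EE :: "nat \<Rightarrow> nat \<Rightarrow> nat \<Rightarrow> complex mat" where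
  "EE n p q = mat n n (\<lambda>(i,j). if i = p \<and> j = q then 1 else 0)"

lemma EE_carrier[simp]: "EE n p q \<in> carrier_mat n n" unfolding EE_def by simp

lemma chan_props:
  assumes "is_bipartite_channel a1 b1 a2 b2 N"
  shows "\<And>X. X \<in> carrier_mat (a1*b1) (a1*b1) \<Longrightarrow> N X \<in> carrier_mat (a2*b2) (a2*b2)"
    and "\<And>X Y a b. X \<in> carrier_mat (a1*b1) (a1*b1) \<Longrightarrow> Y \<in> carrier_mat (a1*b1) (a1*b1) \<Longrightarrow>
           N (a \<cdot>\<^sub>m X + b \<cdot>\<^sub>m Y) = a \<cdot>\<^sub>m N X + b \<cdot>\<^sub>m N Y"
    and "\<And>X. X \<in> carrier_mat (a1*b1) (a1*b1) \<Longrightarrow> tr (N X) = tr X"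
    and "\<And>k X. X \<in> carrier_mat (k*(a1*b1)) (k*(a1*b1)) \<Longrightarrow> psd X \<Longrightarrow> psd (ext_id k 1 (a1*b1) (a2*b2) N X)"
    and "0 < a1" "0 < b1" "0 < a2" "0 < b2"
  using assms unfolding is_bipartite_channel_def by auto

lemma N_lin_entry:
  assumes ch: "is_bipartite_channel a1 b1 a2 b2 N"
    and B: "B \<in> carrier_mat (a1*b1) (a1*b1)" and i: "i < a2*b2" and j: "j < a2*b2"
  shows "N B $$ (i,j) = (\<Sum>p<a1*b1. \<Sum>q<a1*b1. B $$ (p,q) * N (EE (a1*b1) p q) $$ (i,j))"
proof -
  let ?n = "a1*b1"
  note cp = chan_props[OF ch]
  let ?M = "\<lambda>S. mat ?n ?n (\<lambda>(p,q). if (p,q) \<in> S then B $$ (p,q) else 0)"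
  have main: "N (?M S) $$ (i,j) = (\<Sum>s\<in>S. B $$ s * N (EE ?n (fst s) (snd s)) $$ (i,j))"
    if "finite S" "S \<subseteq> {..<?n} \<times> {..<?n}" for S
    using that
  proof (induction S rule: finite_subset_induct)
    case empty
    let ?Z = "?M {}"
    have Zc: "?Z \<in> carrier_mat ?n ?n" by simp
    have "?Z = 0 \<cdot>\<^sub>m ?Z + 0 \<cdot>\<^sub>m ?Z" by (rule eq_matI) auto
    hence "N ?Z = 0 \<cdot>\<^sub>m N ?Z + 0 \<cdot>\<^sub>m N ?Z" using cp(2)[OF Zc Zc] by metis
    hence "N ?Z $$ (i,j) = (0 \<cdot>\<^sub>m N ?Z + 0 \<cdot>\<^sub>m N ?Z) $$ (i,j)" by simp
    also have "\<dots> = 0" using cp(1)[OF Zc] i j by simp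
    finally show ?case by (simp add: case_prod_unfold)
  next
    case (insert s S)
    obtain p q where s: "s = (p,q)" by (cases s) auto
    have pq: "p < ?n" "q < ?n" using insert(2) s by auto
    have MS: "?M S \<in> carrier_mat ?n ?n" by simp
    have "?M (insert s S) = 1 \<cdot>\<^sub>m ?M S + (B $$ (p,q)) \<cdot>\<^sub>m EE ?n p q"
      using insert(3) unfolding s by (intro eq_matI) (auto simp: EE_def)
    hence "N (?M (insert s S)) = 1 \<cdot>\<^sub>m N (?M S) + (B $$ (p,q)) \<cdot>\<^sub>m N (EE ?n p q)"
      using cp(2)[OF MS EE_carrier] by metis
    hence "N (?M (insert s S)) $$ (i,j) = N (?M S) $$ (i,j) + B $$ (p,q) * N (EE ?n p q) $$ (i,j)"
      using carrier_matD[OF cp(1)[OF MS]] carrier_matD[OF cp(1)[OF EE_carrier]] i j by simp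
    thus ?case using insert(3,4) insert.IH s by (simp add: insert(1))
  qed
  have "?M ({..<?n} \<times> {..<?n}) = B" by (rule eq_matI) (use B in auto)
  hence "N B $$ (i,j) = (\<Sum>s\<in>{..<?n} \<times> {..<?n}. B $$ s * N (EE ?n (fst s) (snd s)) $$ (i,j))"
    using main[of "{..<?n} \<times> {..<?n}"] by simp
  also have "\<dots> = (\<Sum>p<?n. \<Sum>q<?n. B $$ (p,q) * N (EE ?n p q) $$ (i,j))"
    by (simp add: sum_pair)
  finally show ?thesis .
qed


definition Jk :: "nat \<Rightarrow> nat \<Rightarrow> nat \<Rightarrow> (complex mat \<Rightarrow> complex mat) \<Rightarrow> nat\<times>nat\<times>nat\<times>nat \<Rightarrow> nat\<times>nat\<times>nat\<times>nat \<Rightarrow> complex" where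
  "Jk a1 b1 b2 N = (\<lambda>(x,a,b,y) (x',a',b',y'). N (EE (a1*b1) (x*b1+y) (x'*b1+y')) $$ (a*b2+b, a'*b2+b'))"

lemma sigma_kernel:
  assumes ch: "is_bipartite_channel a1 b1 a2 b2 N"
    and u: "u \<in> box4 lA a2 b2 lB" and u2: "u2 \<in> box4 lA a2 b2 lB"
  shows "kmat (ext_id lA lB (a1*b1) (a2*b2) N \<rho>) a2 b2 lB u u2 = lnk a1 b1 (kmat \<rho> a1 b1 lB) (Jk a1 b1 b2 N) u u2"
proof -
  obtain l a b m where uu: "u = (l,a,b,m)" by (cases u) auto
  obtain l' a' b' m' where uu2: "u2 = (l',a',b',m')" by (cases u2) auto
  have r: "l < lA" "a < a2" "b < b2" "m < lB" "l' < lA" "a' < a2" "b' < b2" "m' < lB"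
    using u u2 uu uu2 by (auto simp: box4_mem)
  have k: "a*b2+b < a2*b2" "a'*b2+b' < a2*b2" using r by (auto intro: e2_lt)
  let ?n = "a1*b1"
  let ?B = "mat ?n ?n (\<lambda>(p,q). \<rho> $$ ((l*?n+p)*lB+m, (l'*?n+q)*lB+m'))"
  have "kmat (ext_id lA lB ?n (a2*b2) N \<rho>) a2 b2 lB u u2 = N ?B $$ (a*b2+b, a'*b2+b')"
    unfolding kmat_def uu uu2 e4_eq3 using r k by (simp add: ext_id_entry)
  also have "\<dots> = (\<Sum>p<?n. \<Sum>q<?n. ?B $$ (p,q) * N (EE ?n p q) $$ (a*b2+b, a'*b2+b'))"
    by (rule N_lin_entry[OF ch _ k]) simp
  also have "\<dots> = (\<Sum>p<?n. \<Sum>q<?n. \<rho> $$ ((l*?n+p)*lB+m, (l'*?n+q)*lB+m') * N (EE ?n p q) $$ (a*b2+b, a'*b2+b'))"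
    by (intro sum.cong refl) simp
  also have "\<dots> = (\<Sum>p1<a1. \<Sum>p2<b1. \<Sum>q1<a1. \<Sum>q2<b1.
      \<rho> $$ ((l*?n+(p1*b1+p2))*lB+m, (l'*?n+(q1*b1+q2))*lB+m') * N (EE ?n (p1*b1+p2) (q1*b1+q2)) $$ (a*b2+b, a'*b2+b'))"
    by (simp only: sum_e2)
  also have "\<dots> = lnk a1 b1 (kmat \<rho> a1 b1 lB) (Jk a1 b1 b2 N) u u2"
    unfolding uu uu2 lnk_expand kmat_def Jk_def by (simp add: e4_eq3)
  finally show ?thesis .
qed

lemma e4_dec:
  assumes "b < n2" "c < n3" "d < (n4::nat)"
  shows "e4 n2 n3 n4 (a,b,c,d) div (n2*n3*n4) = a"
    "e4 n2 n3 n4 (a,b,c,d) div (n3*n4) mod n2 = b"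
    "e4 n2 n3 n4 (a,b,c,d) div n4 mod n3 = c"
    "e4 n2 n3 n4 (a,b,c,d) mod n4 = d"
proof -
  let ?r = "e4 n2 n3 n4 (a,b,c,d)"
  have 1: "?r div n4 = (a*n2+b)*n3+c" "?r mod n4 = d" using assms unfolding e4_def by simp_all
  have 2: "?r div n4 div n3 = a*n2+b" "?r div n4 mod n3 = c" unfolding 1 using assms by simp_all
  have 3: "?r div n4 div n3 div n2 = a" unfolding 2 using assms by simp
  have x: "?r div (n3*n4) = ?r div n4 div n3" by (metis div_mult2_eq mult.commute)
  have y: "?r div (n2*n3*n4) = ?r div n4 div n3 div n2"
    by (metis div_mult2_eq mult.commute mult.assoc)
  show "?r div (n2*n3*n4) = a" using y 3 by simp
  show "?r div (n3*n4) mod n2 = b" using x 2 assms by simp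
  show "?r div n4 mod n3 = c" using 2 by simp
  show "?r mod n4 = d" using 1 by simp
qed

lemma choi_kernel:
  assumes u: "u \<in> box4 a1 a2 b2 b1" and u2: "u2 \<in> box4 a1 a2 b2 b1"
  shows "kmat (choi a1 b1 a2 b2 N) a2 b2 b1 u u2 = Jk a1 b1 b2 N u u2"
proof -
  obtain x a b y where uu: "u = (x,a,b,y)" by (cases u) auto
  obtain x' a' b' y' where uu2: "u2 = (x',a',b',y')" by (cases u2) auto
  have r: "x < a1" "a < a2" "b < b2" "y < b1" "x' < a1" "a' < a2" "b' < b2" "y' < b1"
    using u u2 uu uu2 by (auto simp: box4_mem)
  have k: "a*b2+b < a2*b2" "a'*b2+b' < a2*b2" using r by (auto intro: e2_lt)
  let ?n = "a1*b1"
  have inner: "mat ?n ?n (\<lambda>(p,q). choi_input a1 b1 $$ ((x*?n+p)*b1+y, (x'*?n+q)*b1+y')) = EE ?n (x*b1+y) (x'*b1+y')"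
  proof (rule eq_matI)
    fix p q assume p: "p < dim_row (EE ?n (x*b1+y) (x'*b1+y'))" and q: "q < dim_col (EE ?n (x*b1+y) (x'*b1+y'))"
    hence p: "p < a1*b1" and q: "q < a1*b1" by (simp_all add: EE_def)
    have b1: "0 < b1" using r by simp
    define p1 where "p1 = p div b1"
    define p2 where "p2 = p mod b1"
    define q1 where "q1 = q div b1"
    define q2 where "q2 = q mod b1"
    have hp: "p = p1*b1+p2" "q = q1*b1+q2" unfolding p1_def p2_def q1_def q2_def by simp_all
    have pd: "p1 < a1" "p2 < b1" "q1 < a1" "q2 < b1"
      using p q b1 unfolding p1_def p2_def q1_def q2_def by (simp_all add: less_mult_imp_div_less)
    have ep: "(x*?n+p)*b1+y = e4 a1 b1 b1 (x, p1, p2, y)"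
      unfolding e4_def hp by (simp add: algebra_simps)
    have eq: "(x'*?n+q)*b1+y' = e4 a1 b1 b1 (x', q1, q2, y')"
      unfolding e4_def hp by (simp add: algebra_simps)
    have lt: "e4 a1 b1 b1 (x, p1, p2, y) < a1*a1*b1*b1" "e4 a1 b1 b1 (x', q1, q2, y') < a1*a1*b1*b1"
      using pd r by (auto intro!: e4_lt simp: box4_mem)
    have iff: "(x = p1 \<and> x' = q1 \<and> p2 = y \<and> q2 = y') \<longleftrightarrow> (p = x*b1+y \<and> q = x'*b1+y')"
      unfolding hp using pd r e2_inj by metis
    have "mat ?n ?n (\<lambda>(p,q). choi_input a1 b1 $$ ((x*?n+p)*b1+y, (x'*?n+q)*b1+y')) $$ (p,q)
       = choi_input a1 b1 $$ (e4 a1 b1 b1 (x, p1, p2, y), e4 a1 b1 b1 (x', q1, q2, y'))"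
      using p q unfolding ep[symmetric] eq[symmetric] by simp
    also have "\<dots> = (if x = p1 \<and> x' = q1 \<and> p2 = y \<and> q2 = y' then 1 else 0)"
      unfolding choi_input_def using lt pd r by (simp add: e4_dec Let_def)
    also have "\<dots> = EE ?n (x*b1+y) (x'*b1+y') $$ (p,q)"
      unfolding iff EE_def using p q by simp
    finally show "mat ?n ?n (\<lambda>(p,q). choi_input a1 b1 $$ ((x*?n+p)*b1+y, (x'*?n+q)*b1+y')) $$ (p,q) = EE ?n (x*b1+y) (x'*b1+y') $$ (p,q)" .
  qed (simp_all add: EE_def)
  show ?thesis
    unfolding kmat_def uu uu2 e4_eq3 choi_def using r k
    by (simp add: ext_id_entry inner Jk_def)
qed




lemma qf_herm_real:
  assumes h: "\<And>x y. x\<in>B \<Longrightarrow> y\<in>B \<Longrightarrow> H y x = cnj (H x y)"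
  shows "cnj (qf B H v) = qf B H v"
proof -
  have "cnj (qf B H v) = (\<Sum>x\<in>B. \<Sum>y\<in>B. v x * cnj (H x y) * cnj (v y))"
    unfolding qf_def by simp
  also have "\<dots> = (\<Sum>x\<in>B. \<Sum>y\<in>B. cnj (v y) * H y x * v x)"
  proof (intro sum.cong refl)
    fix x y assume "x \<in> B" "y \<in> B"
    hence e: "H y x = cnj (H x y)" by (rule h)
    show "v x * cnj (H x y) * cnj (v y) = cnj (v y) * H y x * v x" unfolding e by (simp add: mult_ac)
  qed
  also have "\<dots> = qf B H v" unfolding qf_def by (rule sum.swap)
  finally show ?thesis .
qed

lemma cmod_prod_le:
  assumes "finite B" "x \<in> B" "y \<in> B"
  shows "cmod (v x) * cmod (v y) \<le> (\<Sum>z\<in>B. (cmod (v z))\<^sup>2)"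
proof -
  let ?n = "(\<Sum>z\<in>B. (cmod (v z))\<^sup>2)"
  have a: "(cmod (v x))\<^sup>2 \<le> ?n" "(cmod (v y))\<^sup>2 \<le> ?n"
    using assms by (auto intro!: member_le_sum)
  have "cmod (v x) * cmod (v y) \<le> ((cmod (v x))\<^sup>2 + (cmod (v y))\<^sup>2) / 2"
    using sum_squares_bound[of "cmod (v x)" "cmod (v y)"] by (simp add: power2_eq_square)
  thus ?thesis using a by simp
qed

lemma kpsd_shift_herm:
  assumes f: "finite B" and h: "\<And>x y. x\<in>B \<Longrightarrow> y\<in>B \<Longrightarrow> H y x = cnj (H x y)"
  shows "\<exists>c\<ge>0. kpsd B (\<lambda>x y. complex_of_real c * (if x = y then 1 else 0) + H x y) \<and>
                kpsd B (\<lambda>x y. complex_of_real c * (if x = y then 1 else 0) - H x y)"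
proof -
  define c where "c = (\<Sum>x\<in>B. \<Sum>y\<in>B. cmod (H x y))"
  have c0: "c \<ge> 0" unfolding c_def by (intro sum_nonneg) auto
  have key: "0 \<le> complex_of_real c * qf B (\<lambda>x y. if x = y then 1 else 0) v + s * qf B H v"
    if s: "s = 1 \<or> s = -1" for v s
  proof -
    define n where "n = (\<Sum>z\<in>B. (cmod (v z))\<^sup>2)"
    have qd: "qf B (\<lambda>x y. if x = y then 1 else 0) v = complex_of_real n"
    proof -
      have "qf B (\<lambda>x y. if x = y then 1 else 0) v = (\<Sum>x\<in>B. \<Sum>y\<in>B. if y = x then cnj (v x) * v y else 0)"
        unfolding qf_def by (intro sum.cong refl) auto
      also have "\<dots> = (\<Sum>x\<in>B. cnj (v x) * v x)" using f by (simp add: sum.delta')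
      also have "\<dots> = (\<Sum>x\<in>B. complex_of_real ((cmod (v x))\<^sup>2))"
        by (intro sum.cong refl) (metis complex_norm_square mult.commute)
      also have "\<dots> = complex_of_real n" unfolding n_def by simp
      finally show ?thesis .
    qed
    have re: "Im (qf B H v) = 0"
    proof -
      have "Im (cnj (qf B H v)) = Im (qf B H v)" using qf_herm_real[OF h, where v=v] by simp
      thus ?thesis by simp
    qed
    have bound: "cmod (qf B H v) \<le> c * n"
    proof -
      have "cmod (qf B H v) \<le> (\<Sum>x\<in>B. cmod (\<Sum>y\<in>B. cnj (v x) * H x y * v y))"
        unfolding qf_def by (rule norm_sum)
      also have "\<dots> \<le> (\<Sum>x\<in>B. \<Sum>y\<in>B. cmod (cnj (v x) * H x y * v y))"
        by (intro sum_mono norm_sum)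
      also have "\<dots> \<le> (\<Sum>x\<in>B. \<Sum>y\<in>B. cmod (H x y) * n)"
      proof (intro sum_mono)
        fix x y assume "x \<in> B" "y \<in> B"
        hence "cmod (v x) * cmod (v y) \<le> n" unfolding n_def using cmod_prod_le[OF f] by blast
        hence "cmod (H x y) * (cmod (v x) * cmod (v y)) \<le> cmod (H x y) * n"
          by (intro mult_left_mono) auto
        thus "cmod (cnj (v x) * H x y * v y) \<le> cmod (H x y) * n" by (simp add: norm_mult mult_ac)
      qed
      also have "\<dots> = c * n" unfolding c_def by (simp add: sum_distrib_right)
      finally show ?thesis .
    qed
    have "\<bar>Re (qf B H v)\<bar> \<le> c * n" using bound abs_Re_le_cmod order_trans by blast
    hence a: "0 \<le> c * n + Re (qf B H v)" "0 \<le> c * n - Re (qf B H v)" by linarith+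
    show ?thesis
    proof (cases "s = 1")
      case True
      show ?thesis unfolding qd True less_eq_complex_def using a re by simp
    next
      case False
      hence "s = -1" using s by blast
      show ?thesis unfolding qd \<open>s = -1\<close> less_eq_complex_def using a re by simp
    qed
  qed
  have "kpsd B (\<lambda>x y. complex_of_real c * (if x = y then 1 else 0) + H x y)"
    unfolding kpsd_def using key[of 1] by (simp add: qf_add qf_scale)
  moreover have "kpsd B (\<lambda>x y. complex_of_real c * (if x = y then 1 else 0) - H x y)"
    unfolding kpsd_def using key[of "-1"] by (simp add: qf_diff qf_scale)
  ultimately show ?thesis using c0 by blast
qed


lemma kpsd_delta: "finite B \<Longrightarrow> kpsd B (\<lambda>x y. if x = y then 1 else 0)"
proof -
  assume f: "finite B"
  show ?thesis
  proof (rule kpsd_rank_sum[where T=B and z="\<lambda>t x. if x = t then 1 else 0", OF f f])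
    fix i j assume "i \<in> B" "j \<in> B"
    have "(\<Sum>t\<in>B. (if i = t then 1 else 0) * cnj (if j = t then 1 else 0)) = (\<Sum>t\<in>B. if t = i then (if j = i then 1 else 0) else (0::complex))"
      by (intro sum.cong refl) auto
    also have "\<dots> = (if i = j then 1 else 0)" using f \<open>i \<in> B\<close> by (simp add: sum.delta')
    finally show "(if i = j then 1 else 0) = (\<Sum>t\<in>B. (if i = t then 1 else 0) * cnj (if j = t then 1 else 0))" by simp
  qed
qed

lemma pt4_diag: "pt4 K x x = K x x"
  unfolding pt4_def by (cases x) auto

lemma pt4_herm:
  assumes h: "\<And>x y. x \<in> box4 n1 n2 n3 n4 \<Longrightarrow> y \<in> box4 n1 n2 n3 n4 \<Longrightarrow> K y x = cnj (K x y)"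
    and x: "x \<in> box4 n1 n2 n3 n4" and y: "y \<in> box4 n1 n2 n3 n4"
  shows "pt4 K y x = cnj (pt4 K x y)"
proof -
  obtain a b c d where xx: "x = (a,b,c,d)" by (cases x) auto
  obtain a' b' c' d' where yy: "y = (a',b',c',d')" by (cases y) auto
  have "(a,b,c',d') \<in> box4 n1 n2 n3 n4" "(a',b',c,d) \<in> box4 n1 n2 n3 n4"
    using x y xx yy by (auto simp: box4_mem)
  thus ?thesis unfolding xx yy pt4_def using h[of "(a,b,c',d')" "(a',b',c,d)"] by simp
qed

lemma tr_kmat:
  assumes "M \<in> carrier_mat (n1*n2*n3*n4) (n1*n2*n3*n4)"
  shows "tr M = (\<Sum>x\<in>box4 n1 n2 n3 n4. kmat M n2 n3 n4 x x)"
  using assms unfolding tr_def kmat_def by (simp add: sum_e4)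

lemma kmat_smult_one:
  assumes "x \<in> box4 n1 n2 n3 n4" "y \<in> box4 n1 n2 n3 n4"
  shows "kmat (c \<cdot>\<^sub>m 1\<^sub>m (n1*n2*n3*n4)) n2 n3 n4 x y = c * (if x = y then 1 else 0)"
proof -
  have "e4 n2 n3 n4 x = e4 n2 n3 n4 y \<longleftrightarrow> x = y"
    using bij_e4[of n2 n3 n4 n1] assms unfolding bij_betw_def inj_on_def by blast
  thus ?thesis unfolding kmat_def using e4_lt[OF assms(1)] e4_lt[OF assms(2)] by simp
qed

lemma feasible_exists:
  assumes A: "A \<in> carrier_mat (n1*n2*n3*n4) (n1*n2*n3*n4)"
    and h: "\<And>x y. x \<in> box4 n1 n2 n3 n4 \<Longrightarrow> y \<in> box4 n1 n2 n3 n4 \<Longrightarrow> kmat A n2 n3 n4 y x = cnj (kmat A n2 n3 n4 x y)"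
  shows "\<exists>S. S \<in> carrier_mat (n1*n2*n3*n4) (n1*n2*n3*n4) \<and> psd S \<and>
     loewner_le (- ptrans2 (n1*n2) (n3*n4) S) (ptrans2 (n1*n2) (n3*n4) A) \<and>
     loewner_le (ptrans2 (n1*n2) (n3*n4) A) (ptrans2 (n1*n2) (n3*n4) S)"
proof -
  let ?B = "box4 n1 n2 n3 n4"
  let ?H = "pt4 (kmat A n2 n3 n4)"
  have hH: "\<And>x y. x \<in> ?B \<Longrightarrow> y \<in> ?B \<Longrightarrow> ?H y x = cnj (?H x y)"
    by (rule pt4_herm[OF h])
  obtain c where c: "c \<ge> 0" "kpsd ?B (\<lambda>x y. complex_of_real c * (if x = y then 1 else 0) + ?H x y)"
     "kpsd ?B (\<lambda>x y. complex_of_real c * (if x = y then 1 else 0) - ?H x y)"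
  proof -
    have "\<exists>c\<ge>0. kpsd ?B (\<lambda>x y. complex_of_real c * (if x = y then 1 else 0) + ?H x y) \<and>
       kpsd ?B (\<lambda>x y. complex_of_real c * (if x = y then 1 else 0) - ?H x y)"
      by (rule kpsd_shift_herm[OF finite_box4]) (rule hH)
    thus ?thesis using that by blast
  qed
  define S where "S = complex_of_real c \<cdot>\<^sub>m 1\<^sub>m (n1*n2*n3*n4)"
  have Sc: "S \<in> carrier_mat (n1*n2*n3*n4) (n1*n2*n3*n4)" unfolding S_def by simp
  have kS: "\<And>x y. x \<in> ?B \<Longrightarrow> y \<in> ?B \<Longrightarrow> kmat S n2 n3 n4 x y = complex_of_real c * (if x = y then 1 else 0)"
    unfolding S_def by (rule kmat_smult_one)
  have pkS: "\<And>x y. x \<in> ?B \<Longrightarrow> y \<in> ?B \<Longrightarrow> pt4 (kmat S n2 n3 n4) x y = complex_of_real c * (if x = y then 1 else 0)"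
  proof -
    fix x y assume x: "x \<in> ?B" and y: "y \<in> ?B"
    obtain a b cc d where xx: "x = (a,b,cc,d)" by (cases x) auto
    obtain a' b' c' d' where yy: "y = (a',b',c',d')" by (cases y) auto
    have "(a,b,c',d') \<in> ?B" "(a',b',cc,d) \<in> ?B"
      using x y xx yy by (auto simp: box4_mem)
    thus "pt4 (kmat S n2 n3 n4) x y = complex_of_real c * (if x = y then 1 else 0)"
      unfolding xx yy pt4_def using kS by auto
  qed
  have "psd S" unfolding psd_kmat[OF Sc]
    using kpsd_scale[OF _ kpsd_delta[OF finite_box4], of "complex_of_real c"] c(1) kpsd_cong[of ?B "kmat S n2 n3 n4"] kS
    by (simp add: less_eq_complex_def)
  moreover have "loewner_le (- ptrans2 (n1*n2) (n3*n4) S) (ptrans2 (n1*n2) (n3*n4) A)"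
    unfolding loew_plus[OF A Sc] using c(2) by (subst kpsd_cong) (auto simp: pkS add.commute)
  moreover have "loewner_le (ptrans2 (n1*n2) (n3*n4) A) (ptrans2 (n1*n2) (n3*n4) S)"
    unfolding loew_minus[OF A Sc] using c(3) by (subst kpsd_cong) (auto simp: pkS)
  ultimately show ?thesis using Sc by blast
qed

lemma feasible_tr_ge:
  assumes A: "A \<in> carrier_mat (n1*n2*n3*n4) (n1*n2*n3*n4)" and S: "S \<in> carrier_mat (n1*n2*n3*n4) (n1*n2*n3*n4)"
    and l: "loewner_le (ptrans2 (n1*n2) (n3*n4) A) (ptrans2 (n1*n2) (n3*n4) S)"
  shows "Re (tr A) \<le> Re (tr S)"
proof -
  have k: "kpsd (box4 n1 n2 n3 n4) (\<lambda>x y. pt4 (kmat S n2 n3 n4) x y - pt4 (kmat A n2 n3 n4) x y)"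
    using l loew_minus[OF A S] by simp
  have "0 \<le> (\<Sum>x\<in>box4 n1 n2 n3 n4. kmat S n2 n3 n4 x x - kmat A n2 n3 n4 x x)"
    using kpsd_diag[OF k finite_box4] by (intro sum_nonneg) (simp add: pt4_diag)
  hence "0 \<le> Re (\<Sum>x\<in>box4 n1 n2 n3 n4. kmat S n2 n3 n4 x x - kmat A n2 n3 n4 x x)"
    by (simp add: less_eq_complex_def)
  thus ?thesis unfolding tr_kmat[OF A] tr_kmat[OF S] by (simp add: sum_subtractf)
qed


lemma EE_dims[simp]: "dim_row (EE n p q) = n" "dim_col (EE n p q) = n" unfolding EE_def by simp_all

lemma EE_swap: "i < (n::nat) \<Longrightarrow> j < n \<Longrightarrow> (EE n p q) $$ (j,i) = (EE n q p) $$ (i,j)"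
  unfolding EE_def by simp
lemma EE_cnj: "i < (n::nat) \<Longrightarrow> j < n \<Longrightarrow> cnj ((EE n p q) $$ (i,j)) = (EE n p q) $$ (i,j)"
  unfolding EE_def by simp
lemma EE_herm1: "i < (n::nat) \<Longrightarrow> j < n \<Longrightarrow> (EE n p q + EE n q p) $$ (j,i) = cnj ((EE n p q + EE n q p) $$ (i,j))"
proof -
  assume ij: "i < n" "j < n"
  have "(EE n p q + EE n q p) $$ (j,i) = EE n p q $$ (j,i) + EE n q p $$ (j,i)"
    using ij by (simp add: EE_def)
  also have "\<dots> = EE n q p $$ (i,j) + EE n p q $$ (i,j)" using ij EE_swap by metis
  also have "\<dots> = cnj (EE n p q $$ (i,j) + EE n q p $$ (i,j))" using ij by (simp add: EE_cnj)
  also have "EE n p q $$ (i,j) + EE n q p $$ (i,j) = (EE n p q + EE n q p) $$ (i,j)"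
    using ij by (simp add: EE_def)
  finally show ?thesis .
qed
lemma EE_herm2: "i < (n::nat) \<Longrightarrow> j < n \<Longrightarrow> (\<i> \<cdot>\<^sub>m EE n p q + (- \<i>) \<cdot>\<^sub>m EE n q p) $$ (j,i) = cnj ((\<i> \<cdot>\<^sub>m EE n p q + (- \<i>) \<cdot>\<^sub>m EE n q p) $$ (i,j))"
proof -
  assume ij: "i < n" "j < n"
  have "(\<i> \<cdot>\<^sub>m EE n p q + (- \<i>) \<cdot>\<^sub>m EE n q p) $$ (j,i) = \<i> * EE n p q $$ (j,i) + (- \<i>) * EE n q p $$ (j,i)"
    using ij by (simp add: EE_def)
  also have "\<dots> = \<i> * EE n q p $$ (i,j) + (- \<i>) * EE n p q $$ (i,j)" using ij EE_swap by metis
  also have "\<dots> = cnj (\<i> * EE n p q $$ (i,j) + (- \<i>) * EE n q p $$ (i,j))" using ij by (simp add: EE_cnj)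
  also have "\<i> * EE n p q $$ (i,j) + (- \<i>) * EE n q p $$ (i,j) = (\<i> \<cdot>\<^sub>m EE n p q + (- \<i>) \<cdot>\<^sub>m EE n q p) $$ (i,j)"
    using ij by (simp add: EE_def)
  finally show ?thesis .
qed
lemma alg1: "(x::complex) = (1/2)*(x+y) + (-\<i>/2)*(\<i>*x + (-\<i>)*y)"
  by (simp add: complex_eq_iff field_simps)
lemma alg2: "(y::complex) = (1/2)*(x+y) + (\<i>/2)*(\<i>*x + (-\<i>)*y)"
  by (simp add: complex_eq_iff field_simps)
lemma N_psd:
  assumes ch: "is_bipartite_channel a1 b1 a2 b2 N"
    and X: "X \<in> carrier_mat (a1*b1) (a1*b1)" and p: "psd X"
  shows "psd (N X)"
proof -
  note cp = chan_props[OF ch]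
  let ?E = "ext_id 1 1 (a1*b1) (a2*b2) N X"
  have X1: "X \<in> carrier_mat (1*(a1*b1)) (1*(a1*b1))" using X by simp
  have pE: "psd ?E" by (rule cp(4)[OF X1 p])
  have Ec: "?E \<in> carrier_mat (a2*b2) (a2*b2)" unfolding ext_id_def by simp
  have NX: "N X \<in> carrier_mat (a2*b2) (a2*b2)" by (rule cp(1)[OF X])
  have mX: "mat (a1*b1) (a1*b1) (\<lambda>(p,q). X $$ ((0*(a1*b1)+p)*1+0, (0*(a1*b1)+q)*1+0)) = X"
    by (rule eq_matI) (use X in auto)
  have ent: "?E $$ (i,j) = N X $$ (i,j)" if "i < a2*b2" "j < a2*b2" for i j
    using ext_id_entry[of 0 1 i "a2*b2" 0 1 0 j 0 "a1*b1" N X] that mX by simp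
  have "kpsd {..<a2*b2} (\<lambda>i j. ?E $$ (i,j))" using pE psd_iff_kpsd[OF Ec] by simp
  moreover have "kpsd {..<a2*b2} (\<lambda>i j. N X $$ (i,j)) = kpsd {..<a2*b2} (\<lambda>i j. ?E $$ (i,j))"
    by (rule kpsd_cong, rule ent[symmetric]) auto
  ultimately have "kpsd {..<a2*b2} (\<lambda>i j. N X $$ (i,j))" by simp
  thus ?thesis using psd_iff_kpsd[OF NX] by simp
qed

definition herm_mat :: "complex mat \<Rightarrow> nat \<Rightarrow> bool" where
  "herm_mat M n \<longleftrightarrow> (\<forall>i<n. \<forall>j<n. M $$ (j,i) = cnj (M $$ (i,j)))"

lemma psd_herm_mat: assumes M: "M \<in> carrier_mat n n" and p: "psd M" shows "herm_mat M n"
proof -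
  have k: "kpsd {..<n} (\<lambda>i j. M $$ (i,j))" using p psd_iff_kpsd[OF M] by simp
  show ?thesis unfolding herm_mat_def
  proof (intro allI impI)
    fix i j assume "i < n" "j < n"
    thus "M $$ (j,i) = cnj (M $$ (i,j))" using kpsd_herm[OF k, of i j] by simp
  qed
qed

lemma N_herm:
  assumes ch: "is_bipartite_channel a1 b1 a2 b2 N"
    and H: "H \<in> carrier_mat (a1*b1) (a1*b1)" and h: "herm_mat H (a1*b1)"
  shows "herm_mat (N H) (a2*b2)"
proof -
  note cp = chan_props[OF ch]
  let ?n = "a1*b1"
  obtain c where c: "c \<ge> 0" "kpsd {..<?n} (\<lambda>x y. complex_of_real c * (if x = y then 1 else 0) + H $$ (x,y))"
  proof -
    have "\<exists>c\<ge>0. kpsd {..<?n} (\<lambda>x y. complex_of_real c * (if x = y then 1 else 0) + H $$ (x,y)) \<and>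
       kpsd {..<?n} (\<lambda>x y. complex_of_real c * (if x = y then 1 else 0) - H $$ (x,y))"
      by (rule kpsd_shift_herm) (use h in \<open>unfold herm_mat_def lessThan_iff, blast+\<close>)
    thus ?thesis using that by blast
  qed
  define C where "C = complex_of_real c \<cdot>\<^sub>m 1\<^sub>m ?n"
  define A where "A = C + H"
  have Cc: "C \<in> carrier_mat ?n ?n" unfolding C_def by simp
  have Ac: "A \<in> carrier_mat ?n ?n" unfolding A_def using H by simp
  have k1: "kpsd {..<?n} (\<lambda>i j. complex_of_real c * (if i = j then 1 else 0))"
    using kpsd_scale[OF _ kpsd_delta[of "{..<?n}"], of "complex_of_real c"] c(1)
    by (simp add: less_eq_complex_def)
  have "kpsd {..<?n} (\<lambda>i j. C $$ (i,j)) = kpsd {..<?n} (\<lambda>i j. complex_of_real c * (if i = j then 1 else 0))"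
    by (rule kpsd_cong) (simp add: C_def)
  hence pC: "psd C" unfolding psd_iff_kpsd[OF Cc] using k1 by simp
  have "kpsd {..<?n} (\<lambda>i j. A $$ (i,j)) = kpsd {..<?n} (\<lambda>x y. complex_of_real c * (if x = y then 1 else 0) + H $$ (x,y))"
    by (rule kpsd_cong) (use H in \<open>simp add: A_def C_def\<close>)
  hence pA: "psd A" unfolding psd_iff_kpsd[OF Ac] using c(2) by simp
  have hA: "herm_mat (N A) (a2*b2)" by (rule psd_herm_mat[OF cp(1)[OF Ac] N_psd[OF ch Ac pA]])
  have hC: "herm_mat (N C) (a2*b2)" by (rule psd_herm_mat[OF cp(1)[OF Cc] N_psd[OF ch Cc pC]])
  have "H = 1 \<cdot>\<^sub>m A + (-1) \<cdot>\<^sub>m C"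
    by (rule eq_matI) (use H in \<open>auto simp: A_def C_def\<close>)
  hence NH: "N H = 1 \<cdot>\<^sub>m N A + (-1) \<cdot>\<^sub>m N C" using cp(2)[OF Ac Cc] by metis
  show ?thesis unfolding herm_mat_def NH
  proof (intro allI impI)
    fix i j assume ij: "i < a2*b2" "j < a2*b2"
    have 1: "N A $$ (j,i) = cnj (N A $$ (i,j))" using hA ij unfolding herm_mat_def by blast
    have 2: "N C $$ (j,i) = cnj (N C $$ (i,j))" using hC ij unfolding herm_mat_def by blast
    show "(1 \<cdot>\<^sub>m N A + - 1 \<cdot>\<^sub>m N C) $$ (j, i) = cnj ((1 \<cdot>\<^sub>m N A + - 1 \<cdot>\<^sub>m N C) $$ (i, j))"
      using ij carrier_matD[OF cp(1)[OF Ac]] carrier_matD[OF cp(1)[OF Cc]] by (simp add: 1 2)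
  qed
qed

lemma N_EE_herm:
  assumes ch: "is_bipartite_channel a1 b1 a2 b2 N"
    and p: "p < a1*b1" and q: "q < a1*b1" and k: "k < a2*b2" and k': "k' < a2*b2"
  shows "N (EE (a1*b1) q p) $$ (k',k) = cnj (N (EE (a1*b1) p q) $$ (k,k'))"
proof -
  note cp = chan_props[OF ch]
  let ?n = "a1*b1"
  define A where "A = EE ?n p q + EE ?n q p"
  define B where "B = \<i> \<cdot>\<^sub>m EE ?n p q + (- \<i>) \<cdot>\<^sub>m EE ?n q p"
  have Ac: "A \<in> carrier_mat ?n ?n" "B \<in> carrier_mat ?n ?n" unfolding A_def B_def by simp_all
  have hA: "herm_mat A ?n" unfolding herm_mat_def A_def using EE_herm1 by blast
  have hB: "herm_mat B ?n" unfolding herm_mat_def B_def using EE_herm2 by blast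
  have e1: "EE ?n p q = (1/2) \<cdot>\<^sub>m A + (- \<i>/2) \<cdot>\<^sub>m B"
  proof (rule eq_matI)
    fix i j assume "i < dim_row ((1/2) \<cdot>\<^sub>m A + (- \<i>/2) \<cdot>\<^sub>m B)" "j < dim_col ((1/2) \<cdot>\<^sub>m A + (- \<i>/2) \<cdot>\<^sub>m B)"
    hence ij: "i < ?n" "j < ?n" using Ac by auto
    have "((1/2) \<cdot>\<^sub>m A + (- \<i>/2) \<cdot>\<^sub>m B) $$ (i,j) = (1/2)*(EE ?n p q $$ (i,j) + EE ?n q p $$ (i,j)) + (-\<i>/2)*(\<i>*EE ?n p q $$ (i,j) + (-\<i>)*EE ?n q p $$ (i,j))"
      using ij unfolding A_def B_def by simp
    thus "EE ?n p q $$ (i,j) = ((1/2) \<cdot>\<^sub>m A + (- \<i>/2) \<cdot>\<^sub>m B) $$ (i,j)" using alg1 by metis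
  qed (use Ac in auto)
  have e2: "EE ?n q p = (1/2) \<cdot>\<^sub>m A + (\<i>/2) \<cdot>\<^sub>m B"
  proof (rule eq_matI)
    fix i j assume "i < dim_row ((1/2) \<cdot>\<^sub>m A + (\<i>/2) \<cdot>\<^sub>m B)" "j < dim_col ((1/2) \<cdot>\<^sub>m A + (\<i>/2) \<cdot>\<^sub>m B)"
    hence ij: "i < ?n" "j < ?n" using Ac by auto
    have "((1/2) \<cdot>\<^sub>m A + (\<i>/2) \<cdot>\<^sub>m B) $$ (i,j) = (1/2)*(EE ?n p q $$ (i,j) + EE ?n q p $$ (i,j)) + (\<i>/2)*(\<i>*EE ?n p q $$ (i,j) + (-\<i>)*EE ?n q p $$ (i,j))"
      using ij unfolding A_def B_def by simp
    thus "EE ?n q p $$ (i,j) = ((1/2) \<cdot>\<^sub>m A + (\<i>/2) \<cdot>\<^sub>m B) $$ (i,j)" using alg2 by metis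
  qed (use Ac in auto)
  have N1: "N (EE ?n p q) = (1/2) \<cdot>\<^sub>m N A + (- \<i>/2) \<cdot>\<^sub>m N B" unfolding e1 by (rule cp(2)[OF Ac])
  have N2: "N (EE ?n q p) = (1/2) \<cdot>\<^sub>m N A + (\<i>/2) \<cdot>\<^sub>m N B" unfolding e2 by (rule cp(2)[OF Ac])
  have hNA: "herm_mat (N A) (a2*b2)" by (rule N_herm[OF ch Ac(1) hA])
  have hNB: "herm_mat (N B) (a2*b2)" by (rule N_herm[OF ch Ac(2) hB])
  have 1: "N A $$ (k',k) = cnj (N A $$ (k,k'))" using hNA k k' unfolding herm_mat_def by blast
  have 2: "N B $$ (k',k) = cnj (N B $$ (k,k'))" using hNB k k' unfolding herm_mat_def by blast
  show ?thesis unfolding N1 N2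
    using k k' carrier_matD[OF cp(1)[OF Ac(1)]] carrier_matD[OF cp(1)[OF Ac(2)]]
    by (simp add: 1 2)
qed

lemma Jk_herm:
  assumes ch: "is_bipartite_channel a1 b1 a2 b2 N"
    and x: "x \<in> box4 a1 a2 b2 b1" and y: "y \<in> box4 a1 a2 b2 b1"
  shows "Jk a1 b1 b2 N y x = cnj (Jk a1 b1 b2 N x y)"
proof -
  obtain x1 a b x4 where xx: "x = (x1,a,b,x4)" by (cases x) auto
  obtain y1 a' b' y4 where yy: "y = (y1,a',b',y4)" by (cases y) auto
  have r: "x1 < a1" "a < a2" "b < b2" "x4 < b1" "y1 < a1" "a' < a2" "b' < b2" "y4 < b1"
    using x y xx yy by (auto simp: box4_mem)
  have i: "x1*b1+x4 < a1*b1" "y1*b1+y4 < a1*b1" "a*b2+b < a2*b2" "a'*b2+b' < a2*b2"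
    using r by (auto intro: e2_lt)
  show ?thesis unfolding xx yy Jk_def using N_EE_herm[OF ch i] by simp
qed




lemma vnorm_L2: "vnorm v = L2_set (\<lambda>i. cmod (v $ i)) {..<dim_vec v}"
  unfolding vnorm_def L2_set_def ..

lemma vnorm_nonneg[simp]: "0 \<le> vnorm v" unfolding vnorm_def by (simp add: sum_nonneg)

lemma mv_entry_bound:
  assumes R: "R \<in> carrier_mat n n" and v: "v \<in> carrier_vec n" and i: "i < n"
  shows "cmod ((R *\<^sub>v v) $ i) \<le> (\<Sum>j<n. cmod (R $$ (i,j)) * cmod (v $ j))"
proof -
  have "(R *\<^sub>v v) $ i = (\<Sum>j<n. R $$ (i,j) * v $ j)"
    using R v i by (simp add: scalar_prod_def atLeast0LessThan)
  also have "cmod \<dots> \<le> (\<Sum>j<n. cmod (R $$ (i,j) * v $ j))" by (rule norm_sum)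
  finally show ?thesis by (simp add: norm_mult)
qed

lemma vnorm_mv_bdd:
  assumes R: "R \<in> carrier_mat n n" and v: "v \<in> carrier_vec n" and nv: "vnorm v \<le> 1"
  shows "vnorm (R *\<^sub>v v) \<le> (\<Sum>i<n. \<Sum>j<n. cmod (R $$ (i,j)))"
proof -
  have dv: "dim_vec v = n" "dim_vec (R *\<^sub>v v) = n" using R v by auto
  have vj: "cmod (v $ j) \<le> 1" if "j < n" for j
    using member_le_L2_set[of "{..<n}" j "\<lambda>i. cmod (v $ i)"] that nv unfolding vnorm_L2 dv by simp
  have "vnorm (R *\<^sub>v v) \<le> (\<Sum>i<n. cmod ((R *\<^sub>v v) $ i))"
    unfolding vnorm_L2 dv by (rule L2_set_le_sum) simp
  also have "\<dots> \<le> (\<Sum>i<n. \<Sum>j<n. cmod (R $$ (i,j)) * cmod (v $ j))"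
    by (intro sum_mono mv_entry_bound[OF R v]) simp
  also have "\<dots> \<le> (\<Sum>i<n. \<Sum>j<n. cmod (R $$ (i,j)))"
    by (intro sum_mono) (use vj in \<open>auto intro: mult_left_le\<close>)
  finally show ?thesis .
qed

lemma opnorm_ge:
  assumes R: "R \<in> carrier_mat n n" and v: "v \<in> carrier_vec n" and nv: "vnorm v \<le> 1"
  shows "vnorm (R *\<^sub>v v) \<le> opnorm R"
  unfolding opnorm_def
proof (rule cSup_upper)
  show "vnorm (R *\<^sub>v v) \<in> {vnorm (R *\<^sub>v v) |v. v \<in> carrier_vec (dim_col R) \<and> vnorm v \<le> 1}"
    using R v nv by auto
  show "bdd_above {vnorm (R *\<^sub>v v) |v. v \<in> carrier_vec (dim_col R) \<and> vnorm v \<le> 1}"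
    unfolding bdd_above_def using vnorm_mv_bdd[OF R] R by auto
qed

lemma vnorm_smult: "vnorm (c \<cdot>\<^sub>v v) = cmod c * vnorm v"
proof -
  have "vnorm (c \<cdot>\<^sub>v v) = L2_set (\<lambda>i. cmod c * cmod (v $ i)) {..<dim_vec v}"
    unfolding vnorm_L2 by (intro L2_set_cong) (auto simp: norm_mult)
  also have "\<dots> = cmod c * vnorm v" unfolding vnorm_L2 by (simp add: L2_set_right_distrib)
  finally show ?thesis .
qed

lemma vnorm_zero: "vnorm v = 0 \<Longrightarrow> i < dim_vec v \<Longrightarrow> v $ i = 0"
  unfolding vnorm_L2 by (subst (asm) L2_set_eq_0_iff) auto

lemma opnorm_bound:
  assumes R: "R \<in> carrier_mat n n" and v: "v \<in> carrier_vec n"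
  shows "vnorm (R *\<^sub>v v) \<le> opnorm R * vnorm v"
proof (cases "vnorm v = 0")
  case True
  have "R *\<^sub>v v = 0\<^sub>v n"
  proof (rule eq_vecI)
    fix i assume "i < dim_vec (0\<^sub>v n :: complex vec)"
    hence i: "i < n" by simp
    have "(R *\<^sub>v v) $ i = (\<Sum>j<n. R $$ (i,j) * v $ j)"
      using R v i by (simp add: scalar_prod_def atLeast0LessThan)
    also have "\<dots> = 0" using vnorm_zero[OF True] v by auto
    finally show "(R *\<^sub>v v) $ i = 0\<^sub>v n $ i" using i by simp
  qed (use R in auto)
  hence "vnorm (R *\<^sub>v v) = 0" unfolding vnorm_def by simp
  thus ?thesis using True by simp
next
  case False
  have pos: "vnorm v > 0" using False unfolding vnorm_L2 by (simp add: order_le_neq_trans)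
  define w where "w = complex_of_real (1 / vnorm v) \<cdot>\<^sub>v v"
  have w: "w \<in> carrier_vec n" unfolding w_def using v by simp
  have nw: "vnorm w = 1" unfolding w_def vnorm_smult using pos by (simp add: norm_divide)
  have "R *\<^sub>v w = complex_of_real (1 / vnorm v) \<cdot>\<^sub>v (R *\<^sub>v v)" unfolding w_def by (rule mult_mat_vec[OF R v])
  hence "vnorm (R *\<^sub>v w) = vnorm (R *\<^sub>v v) / vnorm v" using pos by (simp add: vnorm_smult norm_divide)
  moreover have "vnorm (R *\<^sub>v w) \<le> opnorm R" using opnorm_ge[OF R w] nw by simp
  ultimately show ?thesis using pos by (simp add: divide_le_eq)
qed

lemma opnorm_nonneg: assumes R: "R \<in> carrier_mat n n" shows "0 \<le> opnorm R"
proof -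
  have "vnorm (R *\<^sub>v 0\<^sub>v n) \<le> opnorm R" by (rule opnorm_ge[OF R]) (auto simp: vnorm_def)
  moreover have "0 \<le> vnorm (R *\<^sub>v 0\<^sub>v n)" by simp
  ultimately show ?thesis by linarith
qed

lemma quad_bound_vec:
  assumes R: "R \<in> carrier_mat n n" and v: "v \<in> carrier_vec n"
  shows "Re ((R *\<^sub>v v) \<bullet>c v) \<le> opnorm R * (vnorm v)\<^sup>2"
proof -
  let ?x = "R *\<^sub>v v"
  have dv: "dim_vec v = n" "dim_vec ?x = n" using R v by auto
  have e: "?x \<bullet>c v = (\<Sum>i<n. ?x $ i * cnj (v $ i))" using dv by (simp add: scalar_prod_def atLeast0LessThan)
  have "Re (?x \<bullet>c v) \<le> cmod (\<Sum>i<n. ?x $ i * cnj (v $ i))" unfolding e by (rule complex_Re_le_cmod)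
  also have "\<dots> \<le> (\<Sum>i<n. \<bar>cmod (?x $ i)\<bar> * \<bar>cmod (v $ i)\<bar>)"
    by (rule order_trans[OF norm_sum]) (simp add: norm_mult)
  also have "\<dots> \<le> vnorm ?x * vnorm v" unfolding vnorm_L2 dv by (rule L2_set_mult_ineq)
  also have "\<dots> \<le> opnorm R * vnorm v * vnorm v"
    by (rule mult_right_mono[OF opnorm_bound[OF R v]]) simp
  finally have "Re (?x \<bullet>c v) \<le> opnorm R * vnorm v * vnorm v" .
  thus ?thesis by (simp add: power2_eq_square mult.assoc)
qed

lemma quad_bound_fun:
  assumes R: "R \<in> carrier_mat n n"
  shows "Re (qf {..<n} (\<lambda>i j. R $$ (i,j)) u) \<le> opnorm R * (\<Sum>i<n. (cmod (u i))\<^sup>2)"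
proof -
  have v: "vec n u \<in> carrier_vec n" by simp
  have "qf {..<n} (\<lambda>i j. R $$ (i,j)) u = qf {..<n} (\<lambda>i j. R $$ (i,j)) (\<lambda>i. vec n u $ i)"
    by (intro qf_cong_v) auto
  also have "\<dots> = (R *\<^sub>v vec n u) \<bullet>c vec n u" using quad_eq[OF R v] by simp
  finally have e: "qf {..<n} (\<lambda>i j. R $$ (i,j)) u = (R *\<^sub>v vec n u) \<bullet>c vec n u" .
  have "(vnorm (vec n u))\<^sup>2 = (\<Sum>i<n. (cmod (u i))\<^sup>2)" unfolding vnorm_def by (simp add: sum_nonneg)
  thus ?thesis using quad_bound_vec[OF R v] e by simp
qed

lemma quad_bound_reindex:
  assumes R: "R \<in> carrier_mat n n" and h: "bij_betw h P {..<n}"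
  shows "Re (qf P (\<lambda>c c'. R $$ (h c, h c')) v) \<le> opnorm R * (\<Sum>c\<in>P. (cmod (v c))\<^sup>2)"
proof -
  define u where "u = v \<circ> inv_into P h"
  have vu: "\<And>c. c \<in> P \<Longrightarrow> v c = u (h c)" unfolding u_def using h by (simp add: bij_betw_def)
  have "qf P (\<lambda>c c'. R $$ (h c, h c')) v = (\<Sum>x\<in>P. \<Sum>y\<in>P. cnj (u (h x)) * R $$ (h x, h y) * u (h y))"
    unfolding qf_def using vu by (intro sum.cong refl) auto
  also have "\<dots> = qf {..<n} (\<lambda>i j. R $$ (i,j)) u" unfolding qf_def
    by (rule sum2_reindex[OF h, of "\<lambda>i j. cnj (u i) * R $$ (i,j) * u j"])
  finally have e: "qf P (\<lambda>c c'. R $$ (h c, h c')) v = qf {..<n} (\<lambda>i j. R $$ (i,j)) u" .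
  have "(\<Sum>c\<in>P. (cmod (v c))\<^sup>2) = (\<Sum>c\<in>P. (cmod (u (h c)))\<^sup>2)" using vu by simp
  also have "\<dots> = (\<Sum>i<n. (cmod (u i))\<^sup>2)" by (rule sum.reindex_bij_betw[OF h])
  finally show ?thesis using quad_bound_fun[OF R, of u] e by simp
qed


lemma mv2: "(\<Sum>a\<in>A. \<Sum>x\<in>X. \<Sum>y\<in>Y. f a x y) = (\<Sum>x\<in>X. \<Sum>y\<in>Y. \<Sum>a\<in>A. f a x y)"
  by (subst sum.swap, rule sum.cong[OF refl], rule sum.swap)
lemma mv3: "(\<Sum>a\<in>A. \<Sum>x\<in>X. \<Sum>y\<in>Y. \<Sum>z\<in>Z. f a x y z) = (\<Sum>x\<in>X. \<Sum>y\<in>Y. \<Sum>z\<in>Z. \<Sum>a\<in>A. f a x y z)"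
  by (subst sum.swap, rule sum.cong[OF refl], rule mv2)
lemma mv4: "(\<Sum>a\<in>A. \<Sum>x\<in>X. \<Sum>y\<in>Y. \<Sum>z\<in>Z. \<Sum>w\<in>W. f a x y z w) = (\<Sum>x\<in>X. \<Sum>y\<in>Y. \<Sum>z\<in>Z. \<Sum>w\<in>W. \<Sum>a\<in>A. f a x y z w)"
  by (subst sum.swap, rule sum.cong[OF refl], rule mv3)
lemma mv5: "(\<Sum>a\<in>A. \<Sum>x\<in>X. \<Sum>y\<in>Y. \<Sum>z\<in>Z. \<Sum>w\<in>W. \<Sum>v\<in>V. f a x y z w v) = (\<Sum>x\<in>X. \<Sum>y\<in>Y. \<Sum>z\<in>Z. \<Sum>w\<in>W. \<Sum>v\<in>V. \<Sum>a\<in>A. f a x y z w v)"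
  by (subst sum.swap, rule sum.cong[OF refl], rule mv4)

lemma bij_e2: "bij_betw (\<lambda>(p,q). p*b1+q) ({..<a1}\<times>{..<b1}) {..<a1*(b1::nat)}"
  unfolding bij_betw_def
proof
  show "inj_on (\<lambda>(p,q). p*b1+q) ({..<a1}\<times>{..<b1})"
    unfolding inj_on_def by (auto simp: e2_inj)
  show "(\<lambda>(p,q). p*b1+q) ` ({..<a1}\<times>{..<b1}) = {..<a1*b1}"
  proof
    show "(\<lambda>(p,q). p*b1+q) ` ({..<a1}\<times>{..<b1}) \<subseteq> {..<a1*b1}" by (auto intro: e2_lt)
    show "{..<a1*b1} \<subseteq> (\<lambda>(p,q). p*b1+q) ` ({..<a1}\<times>{..<b1})"
    proof
      fix r assume r: "r \<in> {..<a1*b1}"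
      hence b0: "b1 > 0" by (cases "b1 = 0") auto
      have "r div b1 < a1" using r by (simp add: less_mult_imp_div_less)
      moreover have "r mod b1 < b1" using b0 by simp
      moreover have "r = (\<lambda>(p,q). p*b1+q) (r div b1, r mod b1)" by simp
      ultimately show "r \<in> (\<lambda>(p,q). p*b1+q) ` ({..<a1}\<times>{..<b1})" by blast
    qed
  qed
qed


lemma trace_link_bound:
  assumes S: "kpsd (box4 lA a1 b1 lB) S" and R: "R \<in> carrier_mat (a1*b1) (a1*b1)"
    and hR: "\<And>p q p' q'. p < a1 \<Longrightarrow> q < b1 \<Longrightarrow> p' < a1 \<Longrightarrow> q' < b1 \<Longrightarrow>
       R $$ (p*b1+q, p'*b1+q') = (\<Sum>a<a2. \<Sum>b<b2. Q (p,a,b,q) (p',a,b,q'))"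
  shows "Re (\<Sum>u\<in>box4 lA a2 b2 lB. lnk a1 b1 S Q u u) \<le> opnorm R * Re (\<Sum>x\<in>box4 lA a1 b1 lB. S x x)"
proof -
  let ?P = "{..<a1}\<times>{..<b1}"
  let ?h = "\<lambda>(p,q). p*b1+q"
  define Rk where "Rk = (\<lambda>c c'. R $$ (?h c, ?h c'))"
  obtain k::nat and s where s: "\<forall>x\<in>box4 lA a1 b1 lB. \<forall>y\<in>box4 lA a1 b1 lB. S x y = (\<Sum>t<k. s t x * cnj (s t y))"
    using kpsd_decomp[OF finite_box4 S] by blast
  define w where "w = (\<lambda>t l m c. s t (l, fst c, snd c, m))"
  have A: "(\<Sum>u\<in>box4 lA a2 b2 lB. lnk a1 b1 S Q u u) =
     (\<Sum>l<lA. \<Sum>m<lB. \<Sum>c\<in>?P. \<Sum>c'\<in>?P. S (l,fst c,snd c,m) (l,fst c',snd c',m) * Rk c c')"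
  proof -
    have "(\<Sum>u\<in>box4 lA a2 b2 lB. lnk a1 b1 S Q u u) = (\<Sum>l<lA. \<Sum>a<a2. \<Sum>b<b2. \<Sum>m<lB. \<Sum>p<a1. \<Sum>q<b1. \<Sum>p'<a1. \<Sum>q'<b1.
        S (l,p,q,m) (l,p',q',m) * Q (p,a,b,q) (p',a,b,q'))"
      by (simp add: sum_box4 lnk_expand)
    also have "\<dots> = (\<Sum>l<lA. \<Sum>a<a2. \<Sum>m<lB. \<Sum>p<a1. \<Sum>q<b1. \<Sum>p'<a1. \<Sum>q'<b1. \<Sum>b<b2.
        S (l,p,q,m) (l,p',q',m) * Q (p,a,b,q) (p',a,b,q'))"
      by (rule sum.cong[OF refl], rule sum.cong[OF refl], rule mv5)
    also have "\<dots> = (\<Sum>l<lA. \<Sum>m<lB. \<Sum>p<a1. \<Sum>q<b1. \<Sum>p'<a1. \<Sum>q'<b1. \<Sum>a<a2. \<Sum>b<b2.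
        S (l,p,q,m) (l,p',q',m) * Q (p,a,b,q) (p',a,b,q'))"
      by (rule sum.cong[OF refl], rule mv5)
    also have "\<dots> = (\<Sum>l<lA. \<Sum>m<lB. \<Sum>p<a1. \<Sum>q<b1. \<Sum>p'<a1. \<Sum>q'<b1.
        S (l,p,q,m) (l,p',q',m) * R $$ (p*b1+q, p'*b1+q'))"
      by (intro sum.cong refl) (simp add: hR sum_distrib_left)
    also have "\<dots> = (\<Sum>l<lA. \<Sum>m<lB. \<Sum>c\<in>?P. \<Sum>c'\<in>?P. S (l,fst c,snd c,m) (l,fst c',snd c',m) * Rk c c')"
      by (simp add: sum_pair Rk_def)
    finally show ?thesis .
  qed
  have B: "(\<Sum>c\<in>?P. \<Sum>c'\<in>?P. S (l,fst c,snd c,m) (l,fst c',snd c',m) * Rk c c') =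
      (\<Sum>t<k. qf ?P Rk (\<lambda>c. cnj (w t l m c)))" if lm: "l < lA" "m < lB" for l m
  proof -
    have "(\<Sum>c\<in>?P. \<Sum>c'\<in>?P. S (l,fst c,snd c,m) (l,fst c',snd c',m) * Rk c c') =
       (\<Sum>c\<in>?P. \<Sum>c'\<in>?P. \<Sum>t<k. w t l m c * Rk c c' * cnj (w t l m c'))"
    proof (intro sum.cong refl)
      fix c c' assume c: "c \<in> ?P" and c': "c' \<in> ?P"
      have "(l,fst c,snd c,m) \<in> box4 lA a1 b1 lB" "(l,fst c',snd c',m) \<in> box4 lA a1 b1 lB"
        using c c' lm by (auto simp: box4_mem)
      hence "S (l,fst c,snd c,m) (l,fst c',snd c',m) = (\<Sum>t<k. w t l m c * cnj (w t l m c'))"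
        using s unfolding w_def by blast
      hence "S (l,fst c,snd c,m) (l,fst c',snd c',m) * Rk c c' = (\<Sum>t<k. w t l m c * cnj (w t l m c')) * Rk c c'"
        by simp
      also have "\<dots> = (\<Sum>t<k. w t l m c * cnj (w t l m c') * Rk c c')" by (rule sum_distrib_right)
      also have "\<dots> = (\<Sum>t<k. w t l m c * Rk c c' * cnj (w t l m c'))" by (intro sum.cong refl) (simp add: mult_ac)
      finally show "S (l,fst c,snd c,m) (l,fst c',snd c',m) * Rk c c' = (\<Sum>t<k. w t l m c * Rk c c' * cnj (w t l m c'))" .
    qed
    also have "\<dots> = (\<Sum>t<k. \<Sum>c\<in>?P. \<Sum>c'\<in>?P. w t l m c * Rk c c' * cnj (w t l m c'))"
      by (rule mv2[symmetric])
    also have "\<dots> = (\<Sum>t<k. qf ?P Rk (\<lambda>c. cnj (w t l m c)))" unfolding qf_def by simp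
    finally show ?thesis .
  qed
  have C: "Re (qf ?P Rk (\<lambda>c. cnj (w t l m c))) \<le> opnorm R * (\<Sum>c\<in>?P. (cmod (w t l m c))\<^sup>2)" for t l m
    using quad_bound_reindex[OF R bij_e2, of "\<lambda>c. cnj (w t l m c)"] unfolding Rk_def by simp
  have D: "Re (\<Sum>x\<in>box4 lA a1 b1 lB. S x x) = (\<Sum>l<lA. \<Sum>m<lB. \<Sum>t<k. \<Sum>c\<in>?P. (cmod (w t l m c))\<^sup>2)"
  proof -
    have "(\<Sum>x\<in>box4 lA a1 b1 lB. S x x) = (\<Sum>x\<in>box4 lA a1 b1 lB. \<Sum>t<k. s t x * cnj (s t x))"
      using s by (intro sum.cong refl) auto
    also have "\<dots> = (\<Sum>l<lA. \<Sum>p<a1. \<Sum>q<b1. \<Sum>m<lB. \<Sum>t<k. s t (l,p,q,m) * cnj (s t (l,p,q,m)))"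
      by (simp add: sum_box4)
    also have "\<dots> = (\<Sum>l<lA. \<Sum>m<lB. \<Sum>p<a1. \<Sum>q<b1. \<Sum>t<k. s t (l,p,q,m) * cnj (s t (l,p,q,m)))"
      by (rule sum.cong[OF refl], rule mv2[symmetric])
    also have "\<dots> = (\<Sum>l<lA. \<Sum>m<lB. \<Sum>t<k. \<Sum>p<a1. \<Sum>q<b1. s t (l,p,q,m) * cnj (s t (l,p,q,m)))"
      by (rule sum.cong[OF refl], rule sum.cong[OF refl], rule mv2[symmetric])
    also have "\<dots> = (\<Sum>l<lA. \<Sum>m<lB. \<Sum>t<k. \<Sum>c\<in>?P. complex_of_real ((cmod (w t l m c))\<^sup>2))"
      unfolding w_def by (simp add: sum_pair complex_norm_square[symmetric])
    finally show ?thesis by (simp add: Re_sum)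
  qed
  have "Re (\<Sum>u\<in>box4 lA a2 b2 lB. lnk a1 b1 S Q u u) = (\<Sum>l<lA. \<Sum>m<lB. \<Sum>t<k. Re (qf ?P Rk (\<lambda>c. cnj (w t l m c))))"
    unfolding A by (simp add: Re_sum B)
  also have "\<dots> \<le> (\<Sum>l<lA. \<Sum>m<lB. \<Sum>t<k. opnorm R * (\<Sum>c\<in>?P. (cmod (w t l m c))\<^sup>2))"
    by (intro sum_mono C)
  also have "\<dots> = opnorm R * Re (\<Sum>x\<in>box4 lA a1 b1 lB. S x x)"
    unfolding D by (simp add: sum_distrib_left)
  finally show ?thesis .
qed




lemma core_kernel:
  assumes Xp: "kpsd (box4 lA a1 b1 lB) (\<lambda>x y. pt4 R x y + pt4 S x y)"
    and Xm: "kpsd (box4 lA a1 b1 lB) (\<lambda>x y. pt4 S x y - pt4 R x y)"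
    and Yp: "kpsd (box4 a1 a2 b2 b1) (\<lambda>x y. pt4 J x y + pt4 Q x y)"
    and Ym: "kpsd (box4 a1 a2 b2 b1) (\<lambda>x y. pt4 Q x y - pt4 J x y)"
  shows "kpsd (box4 lA a2 b2 lB) (\<lambda>u v. pt4 (lnk a1 b1 R J) u v + pt4 (lnk a1 b1 S Q) u v)"
    and "kpsd (box4 lA a2 b2 lB) (\<lambda>u v. pt4 (lnk a1 b1 S Q) u v - pt4 (lnk a1 b1 R J) u v)"
proof -
  let ?pR = "pt4 R" and ?pS = "pt4 S" and ?pJ = "pt4 J" and ?pQ = "pt4 Q"
  have c1: "(\<lambda>x y. ?pS x y + ?pR x y) = (\<lambda>x y. ?pR x y + ?pS x y)" by (auto simp: add.commute)
  have c2: "(\<lambda>x y. ?pQ x y + ?pJ x y) = (\<lambda>x y. ?pJ x y + ?pQ x y)" by (auto simp: add.commute)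
  have Xp': "kpsd (box4 lA a1 b1 lB) (\<lambda>x y. ?pS x y + ?pR x y)" using Xp unfolding c1 .
  have Yp': "kpsd (box4 a1 a2 b2 b1) (\<lambda>x y. ?pQ x y + ?pJ x y)" using Yp unfolding c2 .
  have L1: "kpsd (box4 lA a2 b2 lB) (lnk a1 b1 (\<lambda>x y. ?pS x y + ?pR x y) (\<lambda>x y. ?pQ x y + ?pJ x y))"
    by (rule lnk_psd[OF Xp' Yp'])
  have L2: "kpsd (box4 lA a2 b2 lB) (lnk a1 b1 (\<lambda>x y. ?pS x y - ?pR x y) (\<lambda>x y. ?pQ x y - ?pJ x y))"
    by (rule lnk_psd[OF Xm Ym])
  have L3: "kpsd (box4 lA a2 b2 lB) (lnk a1 b1 (\<lambda>x y. ?pS x y + ?pR x y) (\<lambda>x y. ?pQ x y - ?pJ x y))"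
    by (rule lnk_psd[OF Xp' Ym])
  have L4: "kpsd (box4 lA a2 b2 lB) (lnk a1 b1 (\<lambda>x y. ?pS x y - ?pR x y) (\<lambda>x y. ?pQ x y + ?pJ x y))"
    by (rule lnk_psd[OF Xm Yp'])
  have h0: "(0::complex) \<le> 1/2" by (simp add: less_eq_complex_def)
  have P: "kpsd (box4 lA a2 b2 lB) (\<lambda>u v. (1/2) * (lnk a1 b1 (\<lambda>x y. ?pS x y + ?pR x y) (\<lambda>x y. ?pQ x y + ?pJ x y) u v +
      lnk a1 b1 (\<lambda>x y. ?pS x y - ?pR x y) (\<lambda>x y. ?pQ x y - ?pJ x y) u v))"
    by (rule kpsd_scale[OF h0 kpsd_add[OF L1 L2]])
  have M: "kpsd (box4 lA a2 b2 lB) (\<lambda>u v. (1/2) * (lnk a1 b1 (\<lambda>x y. ?pS x y + ?pR x y) (\<lambda>x y. ?pQ x y - ?pJ x y) u v +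
      lnk a1 b1 (\<lambda>x y. ?pS x y - ?pR x y) (\<lambda>x y. ?pQ x y + ?pJ x y) u v))"
    by (rule kpsd_scale[OF h0 kpsd_add[OF L3 L4]])
  have "kpsd (box4 lA a2 b2 lB) (\<lambda>u v. pt4 (lnk a1 b1 R J) u v + pt4 (lnk a1 b1 S Q) u v) =
        kpsd (box4 lA a2 b2 lB) (\<lambda>u v. (1/2) * (lnk a1 b1 (\<lambda>x y. ?pS x y + ?pR x y) (\<lambda>x y. ?pQ x y + ?pJ x y) u v +
      lnk a1 b1 (\<lambda>x y. ?pS x y - ?pR x y) (\<lambda>x y. ?pQ x y - ?pJ x y) u v))"
  proof (rule kpsd_cong)
    fix u v
    show "pt4 (lnk a1 b1 R J) u v + pt4 (lnk a1 b1 S Q) u v = (1/2) * (lnk a1 b1 (\<lambda>x y. ?pS x y + ?pR x y) (\<lambda>x y. ?pQ x y + ?pJ x y) u v +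
      lnk a1 b1 (\<lambda>x y. ?pS x y - ?pR x y) (\<lambda>x y. ?pQ x y - ?pJ x y) u v)"
      unfolding lnk_pm pt4_lnk by simp
  qed
  thus "kpsd (box4 lA a2 b2 lB) (\<lambda>u v. pt4 (lnk a1 b1 R J) u v + pt4 (lnk a1 b1 S Q) u v)" using P by simp
  have "kpsd (box4 lA a2 b2 lB) (\<lambda>u v. pt4 (lnk a1 b1 S Q) u v - pt4 (lnk a1 b1 R J) u v) =
        kpsd (box4 lA a2 b2 lB) (\<lambda>u v. (1/2) * (lnk a1 b1 (\<lambda>x y. ?pS x y + ?pR x y) (\<lambda>x y. ?pQ x y - ?pJ x y) u v +
      lnk a1 b1 (\<lambda>x y. ?pS x y - ?pR x y) (\<lambda>x y. ?pQ x y + ?pJ x y) u v))"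
  proof (rule kpsd_cong)
    fix u v
    show "pt4 (lnk a1 b1 S Q) u v - pt4 (lnk a1 b1 R J) u v = (1/2) * (lnk a1 b1 (\<lambda>x y. ?pS x y + ?pR x y) (\<lambda>x y. ?pQ x y - ?pJ x y) u v +
      lnk a1 b1 (\<lambda>x y. ?pS x y - ?pR x y) (\<lambda>x y. ?pQ x y + ?pJ x y) u v)"
      unfolding lnk_mp pt4_lnk by simp
  qed
  thus "kpsd (box4 lA a2 b2 lB) (\<lambda>u v. pt4 (lnk a1 b1 S Q) u v - pt4 (lnk a1 b1 R J) u v)" using M by simp
qed


definition mk4 :: "nat \<Rightarrow> nat \<Rightarrow> nat \<Rightarrow> nat \<Rightarrow> (nat\<times>nat\<times>nat\<times>nat \<Rightarrow> nat\<times>nat\<times>nat\<times>nat \<Rightarrow> complex) \<Rightarrow> complex mat" where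
  "mk4 n1 n2 n3 n4 K = mat (n1*n2*n3*n4) (n1*n2*n3*n4)
     (\<lambda>(r,c). K (inv_into (box4 n1 n2 n3 n4) (e4 n2 n3 n4) r) (inv_into (box4 n1 n2 n3 n4) (e4 n2 n3 n4) c))"

lemma mk4_carrier[simp]: "mk4 n1 n2 n3 n4 K \<in> carrier_mat (n1*n2*n3*n4) (n1*n2*n3*n4)"
  unfolding mk4_def by simp

lemma kmat_mk4:
  assumes x: "x \<in> box4 n1 n2 n3 n4" and y: "y \<in> box4 n1 n2 n3 n4"
  shows "kmat (mk4 n1 n2 n3 n4 K) n2 n3 n4 x y = K x y"
proof -
  have inj: "inj_on (e4 n2 n3 n4) (box4 n1 n2 n3 n4)" using bij_e4 unfolding bij_betw_def by blast
  show ?thesis unfolding kmat_def mk4_def using e4_lt[OF x] e4_lt[OF y] inv_into_f_f[OF inj x] inv_into_f_f[OF inj y]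
    by simp
qed

lemma lnk_cong:
  assumes X: "\<And>x y. x \<in> box4 lA a1 b1 lB \<Longrightarrow> y \<in> box4 lA a1 b1 lB \<Longrightarrow> X x y = X' x y"
    and Y: "\<And>x y. x \<in> box4 a1 a2 b2 b1 \<Longrightarrow> y \<in> box4 a1 a2 b2 b1 \<Longrightarrow> Y x y = Y' x y"
    and u: "u \<in> box4 lA a2 b2 lB" and v: "v \<in> box4 lA a2 b2 lB"
  shows "lnk a1 b1 X Y u v = lnk a1 b1 X' Y' u v"
  unfolding lnk_def
proof (intro sum.cong refl)
  fix c c' assume c: "c \<in> {..<a1}\<times>{..<b1}" and c': "c' \<in> {..<a1}\<times>{..<b1}"
  have "fXl u c \<in> box4 lA a1 b1 lB" "fXl v c' \<in> box4 lA a1 b1 lB"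
       "fYl u c \<in> box4 a1 a2 b2 b1" "fYl v c' \<in> box4 a1 a2 b2 b1"
    using u v c c' by (auto simp: box4_def fXl_def fYl_def)
  thus "X (fXl u c) (fXl v c') * Y (fYl u c) (fYl v c') = X' (fXl u c) (fXl v c') * Y' (fYl u c) (fYl v c')"
    using X Y by simp
qed

lemma pt4_cong:
  assumes K: "\<And>x y. x \<in> box4 n1 n2 n3 n4 \<Longrightarrow> y \<in> box4 n1 n2 n3 n4 \<Longrightarrow> K x y = K' x y"
    and x: "x \<in> box4 n1 n2 n3 n4" and y: "y \<in> box4 n1 n2 n3 n4"
  shows "pt4 K x y = pt4 K' x y"
proof -
  obtain a b c d where xx: "x = (a,b,c,d)" by (cases x) auto
  obtain a' b' c' d' where yy: "y = (a',b',c',d')" by (cases y) auto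
  have "(a,b,c',d') \<in> box4 n1 n2 n3 n4" "(a',b',c,d) \<in> box4 n1 n2 n3 n4"
    using x y xx yy by (auto simp: box4_mem)
  thus ?thesis unfolding xx yy pt4_def using K by simp
qed

lemma ptrace_mid_entry:
  assumes "p < a1" "q < b1" "p' < a1" "q' < b1"
  shows "ptrace_mid a1 (a2*b2) b1 Q $$ (p*b1+q, p'*b1+q') = (\<Sum>a<a2. \<Sum>b<b2. kmat Q a2 b2 b1 (p,a,b,q) (p',a,b,q'))"
proof -
  have l: "p*b1+q < a1*b1" "p'*b1+q' < a1*b1" using assms by (auto intro: e2_lt)
  have "ptrace_mid a1 (a2*b2) b1 Q $$ (p*b1+q, p'*b1+q') =
     (\<Sum>k<a2*b2. Q $$ ((p*(a2*b2)+k)*b1+q, (p'*(a2*b2)+k)*b1+q'))"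
    unfolding ptrace_mid_def using l assms by simp
  also have "\<dots> = (\<Sum>a<a2. \<Sum>b<b2. Q $$ ((p*(a2*b2)+(a*b2+b))*b1+q, (p'*(a2*b2)+(a*b2+b))*b1+q'))"
    by (rule sum_e2)
  also have "\<dots> = (\<Sum>a<a2. \<Sum>b<b2. kmat Q a2 b2 b1 (p,a,b,q) (p',a,b,q'))"
    unfolding kmat_def e4_eq3 ..
  finally show ?thesis .
qed

lemma ptrace_mid_carrier[simp]: "ptrace_mid a1 m b1 Q \<in> carrier_mat (a1*b1) (a1*b1)"
  unfolding ptrace_mid_def by simp


lemma transfer:
  assumes ch: "is_bipartite_channel a1 b1 a2 b2 N"
    and \<rho>c: "\<rho> \<in> carrier_mat (lA*a1*b1*lB) (lA*a1*b1*lB)"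
    and Sc: "S \<in> carrier_mat ((lA*a1)*(b1*lB)) ((lA*a1)*(b1*lB))" and Sp: "psd S"
    and S1: "loewner_le (- ptrans2 (lA*a1) (b1*lB) S) (ptrans2 (lA*a1) (b1*lB) \<rho>)"
    and S2: "loewner_le (ptrans2 (lA*a1) (b1*lB) \<rho>) (ptrans2 (lA*a1) (b1*lB) S)"
    and Qc: "Q \<in> carrier_mat (a1*a2*b2*b1) (a1*a2*b2*b1)" and Qp: "psd Q"
    and Q1: "loewner_le (- ptrans2 (a1*a2) (b2*b1) Q) (ptrans2 (a1*a2) (b2*b1) (choi a1 b1 a2 b2 N))"
    and Q2: "loewner_le (ptrans2 (a1*a2) (b2*b1) (choi a1 b1 a2 b2 N)) (ptrans2 (a1*a2) (b2*b1) Q)"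
  defines "S' \<equiv> mk4 lA a2 b2 lB (lnk a1 b1 (kmat S a1 b1 lB) (kmat Q a2 b2 b1))"
  defines "\<sigma> \<equiv> ext_id lA lB (a1*b1) (a2*b2) N \<rho>"
  shows "S' \<in> carrier_mat ((lA*a2)*(b2*lB)) ((lA*a2)*(b2*lB))" "psd S'"
    "loewner_le (- ptrans2 (lA*a2) (b2*lB) S') (ptrans2 (lA*a2) (b2*lB) \<sigma>)"
    "loewner_le (ptrans2 (lA*a2) (b2*lB) \<sigma>) (ptrans2 (lA*a2) (b2*lB) S')"
    "Re (tr S') \<le> opnorm (ptrace_mid a1 (a2*b2) b1 Q) * Re (tr S)"
proof -
  let ?BI = "box4 lA a1 b1 lB" and ?BO = "box4 lA a2 b2 lB" and ?BJ = "box4 a1 a2 b2 b1"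
  let ?J = "choi a1 b1 a2 b2 N"
  let ?kS = "kmat S a1 b1 lB" and ?kQ = "kmat Q a2 b2 b1" and ?kr = "kmat \<rho> a1 b1 lB" and ?kJ = "kmat ?J a2 b2 b1"
  have S4: "S \<in> carrier_mat (lA*a1*b1*lB) (lA*a1*b1*lB)" using Sc unfolding N4_eq .
  have S'4: "S' \<in> carrier_mat (lA*a2*b2*lB) (lA*a2*b2*lB)" unfolding S'_def by simp
  thus "S' \<in> carrier_mat ((lA*a2)*(b2*lB)) ((lA*a2)*(b2*lB))" unfolding N4_eq .
  have \<sigma>c: "\<sigma> \<in> carrier_mat (lA*a2*b2*lB) (lA*a2*b2*lB)"
    unfolding \<sigma>_def ext_id_def by (simp add: mult.assoc)
  have Jc: "?J \<in> carrier_mat (a1*a2*b2*b1) (a1*a2*b2*b1)"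
    unfolding choi_def ext_id_def by (simp add: mult.assoc)
  have kS: "kpsd ?BI ?kS" using Sp psd_kmat[OF S4] by simp
  have kQ: "kpsd ?BJ ?kQ" using Qp psd_kmat[OF Qc] by simp
  have Xp: "kpsd ?BI (\<lambda>x y. pt4 ?kr x y + pt4 ?kS x y)" using S1 loew_plus[OF \<rho>c S4] by simp
  have Xm: "kpsd ?BI (\<lambda>x y. pt4 ?kS x y - pt4 ?kr x y)" using S2 loew_minus[OF \<rho>c S4] by simp
  have Yp: "kpsd ?BJ (\<lambda>x y. pt4 ?kJ x y + pt4 ?kQ x y)" using Q1 loew_plus[OF Jc Qc] by simp
  have Ym: "kpsd ?BJ (\<lambda>x y. pt4 ?kQ x y - pt4 ?kJ x y)" using Q2 loew_minus[OF Jc Qc] by simp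
  note core = core_kernel[OF Xp Xm Yp Ym]
  have k\<sigma>: "kmat \<sigma> a2 b2 lB u v = lnk a1 b1 ?kr ?kJ u v" if "u \<in> ?BO" "v \<in> ?BO" for u v
  proof -
    have "kmat \<sigma> a2 b2 lB u v = lnk a1 b1 ?kr (Jk a1 b1 b2 N) u v"
      unfolding \<sigma>_def by (rule sigma_kernel[OF ch that])
    also have "\<dots> = lnk a1 b1 ?kr ?kJ u v"
      by (rule lnk_cong[OF _ _ that]) (simp_all add: choi_kernel)
    finally show ?thesis .
  qed
  have kS': "kmat S' a2 b2 lB u v = lnk a1 b1 ?kS ?kQ u v" if "u \<in> ?BO" "v \<in> ?BO" for u v
    unfolding S'_def by (rule kmat_mk4[OF that])
  have "kpsd ?BO (kmat S' a2 b2 lB) = kpsd ?BO (lnk a1 b1 ?kS ?kQ)"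
    by (rule kpsd_cong) (rule kS')
  thus "psd S'" using psd_kmat[OF S'4] lnk_psd[OF kS kQ] by simp
  have "kpsd ?BO (\<lambda>u v. pt4 (kmat \<sigma> a2 b2 lB) u v + pt4 (kmat S' a2 b2 lB) u v) =
        kpsd ?BO (\<lambda>u v. pt4 (lnk a1 b1 ?kr ?kJ) u v + pt4 (lnk a1 b1 ?kS ?kQ) u v)"
  proof (rule kpsd_cong)
    fix u v assume "u \<in> ?BO" "v \<in> ?BO"
    thus "pt4 (kmat \<sigma> a2 b2 lB) u v + pt4 (kmat S' a2 b2 lB) u v = pt4 (lnk a1 b1 ?kr ?kJ) u v + pt4 (lnk a1 b1 ?kS ?kQ) u v"
      using pt4_cong[OF k\<sigma>] pt4_cong[OF kS'] by simp
  qed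
  thus "loewner_le (- ptrans2 (lA*a2) (b2*lB) S') (ptrans2 (lA*a2) (b2*lB) \<sigma>)"
    using loew_plus[OF \<sigma>c S'4] core(1) by simp
  have "kpsd ?BO (\<lambda>u v. pt4 (kmat S' a2 b2 lB) u v - pt4 (kmat \<sigma> a2 b2 lB) u v) =
        kpsd ?BO (\<lambda>u v. pt4 (lnk a1 b1 ?kS ?kQ) u v - pt4 (lnk a1 b1 ?kr ?kJ) u v)"
  proof (rule kpsd_cong)
    fix u v assume "u \<in> ?BO" "v \<in> ?BO"
    thus "pt4 (kmat S' a2 b2 lB) u v - pt4 (kmat \<sigma> a2 b2 lB) u v = pt4 (lnk a1 b1 ?kS ?kQ) u v - pt4 (lnk a1 b1 ?kr ?kJ) u v"
      using pt4_cong[OF k\<sigma>] pt4_cong[OF kS'] by simp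
  qed
  thus "loewner_le (ptrans2 (lA*a2) (b2*lB) \<sigma>) (ptrans2 (lA*a2) (b2*lB) S')"
    using loew_minus[OF \<sigma>c S'4] core(2) by simp
  have "tr S' = (\<Sum>u\<in>?BO. lnk a1 b1 ?kS ?kQ u u)"
    unfolding tr_kmat[OF S'4] by (intro sum.cong refl kS')
  moreover have "tr S = (\<Sum>x\<in>?BI. ?kS x x)" by (rule tr_kmat[OF S4])
  moreover have "Re (\<Sum>u\<in>?BO. lnk a1 b1 ?kS ?kQ u u) \<le> opnorm (ptrace_mid a1 (a2*b2) b1 Q) * Re (\<Sum>x\<in>?BI. ?kS x x)"
    by (rule trace_link_bound[OF kS ptrace_mid_carrier]) (rule ptrace_mid_entry)
  ultimately show "Re (tr S') \<le> opnorm (ptrace_mid a1 (a2*b2) b1 Q) * Re (tr S)" by simp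
qed




lemma ext_id_dim[simp]: "dim_row (ext_id dl dr din dout N X) = dl*dout*dr" "dim_col (ext_id dl dr din dout N X) = dl*dout*dr"
  unfolding ext_id_def by simp_all

lemma tr_sigma:
  assumes ch: "is_bipartite_channel a1 b1 a2 b2 N"
    and \<rho>c: "\<rho> \<in> carrier_mat (lA*a1*b1*lB) (lA*a1*b1*lB)"
  shows "tr (ext_id lA lB (a1*b1) (a2*b2) N \<rho>) = tr \<rho>"
proof -
  note cp = chan_props[OF ch]
  let ?din = "a1*b1" and ?dout = "a2*b2"
  let ?B = "\<lambda>l m. mat ?din ?din (\<lambda>(p,q). \<rho> $$ ((l*?din+p)*lB+m, (l*?din+q)*lB+m))"
  have "tr (ext_id lA lB ?din ?dout N \<rho>) = (\<Sum>l<lA. \<Sum>k<?dout. \<Sum>m<lB. ext_id lA lB ?din ?dout N \<rho> $$ ((l*?dout+k)*lB+m, (l*?dout+k)*lB+m))"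
    unfolding tr_def ext_id_dim by (rule sum_e3)
  also have "\<dots> = (\<Sum>l<lA. \<Sum>k<?dout. \<Sum>m<lB. N (?B l m) $$ (k,k))"
    by (intro sum.cong refl) (simp add: ext_id_entry)
  also have "\<dots> = (\<Sum>l<lA. \<Sum>m<lB. \<Sum>k<?dout. N (?B l m) $$ (k,k))"
    by (rule sum.cong[OF refl], rule sum.swap)
  also have "\<dots> = (\<Sum>l<lA. \<Sum>m<lB. tr (N (?B l m)))"
  proof (intro sum.cong refl)
    fix l m
    have "N (?B l m) \<in> carrier_mat ?dout ?dout" by (rule cp(1)) simp
    thus "(\<Sum>k<?dout. N (?B l m) $$ (k,k)) = tr (N (?B l m))" unfolding tr_def by simp
  qed
  also have "\<dots> = (\<Sum>l<lA. \<Sum>m<lB. tr (?B l m))"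
    by (intro sum.cong refl) (rule cp(3), simp)
  also have "\<dots> = (\<Sum>l<lA. \<Sum>m<lB. \<Sum>p<?din. \<rho> $$ ((l*?din+p)*lB+m, (l*?din+p)*lB+m))"
    unfolding tr_def by (intro sum.cong refl) simp_all
  also have "\<dots> = (\<Sum>l<lA. \<Sum>p<?din. \<Sum>m<lB. \<rho> $$ ((l*?din+p)*lB+m, (l*?din+p)*lB+m))"
    by (rule sum.cong[OF refl], rule sum.swap)
  also have "\<dots> = tr \<rho>"
  proof -
    have d: "dim_row \<rho> = lA*(a1*b1)*lB" using \<rho>c by (simp add: mult.assoc)
    show ?thesis unfolding tr_def d by (rule sum_e3[symmetric])
  qed
  finally show ?thesis .
qed

lemma state_feasible:
  assumes \<rho>c: "\<rho> \<in> carrier_mat (lA*a1*b1*lB) (lA*a1*b1*lB)" and p: "psd \<rho>"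
  shows "\<exists>S. S \<in> carrier_mat ((lA*a1)*(b1*lB)) ((lA*a1)*(b1*lB)) \<and> psd S \<and>
     loewner_le (- ptrans2 (lA*a1) (b1*lB) S) (ptrans2 (lA*a1) (b1*lB) \<rho>) \<and>
     loewner_le (ptrans2 (lA*a1) (b1*lB) \<rho>) (ptrans2 (lA*a1) (b1*lB) S)"
proof -
  have k: "kpsd (box4 lA a1 b1 lB) (kmat \<rho> a1 b1 lB)" using p psd_kmat[OF \<rho>c] by simp
  have "\<exists>S. S \<in> carrier_mat (lA*a1*b1*lB) (lA*a1*b1*lB) \<and> psd S \<and>
     loewner_le (- ptrans2 (lA*a1) (b1*lB) S) (ptrans2 (lA*a1) (b1*lB) \<rho>) \<and>
     loewner_le (ptrans2 (lA*a1) (b1*lB) \<rho>) (ptrans2 (lA*a1) (b1*lB) S)"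
    by (rule feasible_exists[OF \<rho>c]) (rule kpsd_herm[OF k finite_box4])
  thus ?thesis unfolding N4_eq .
qed

lemma choi_feasible:
  assumes ch: "is_bipartite_channel a1 b1 a2 b2 N"
  shows "\<exists>Q. Q \<in> carrier_mat (a1*a2*b2*b1) (a1*a2*b2*b1) \<and> psd Q \<and>
     loewner_le (- ptrans2 (a1*a2) (b2*b1) Q) (ptrans2 (a1*a2) (b2*b1) (choi a1 b1 a2 b2 N)) \<and>
     loewner_le (ptrans2 (a1*a2) (b2*b1) (choi a1 b1 a2 b2 N)) (ptrans2 (a1*a2) (b2*b1) Q)"
proof (rule feasible_exists)
  show "choi a1 b1 a2 b2 N \<in> carrier_mat (a1*a2*b2*b1) (a1*a2*b2*b1)"
    unfolding choi_def ext_id_def by (simp add: mult.assoc)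
  fix x y assume x: "x \<in> box4 a1 a2 b2 b1" and y: "y \<in> box4 a1 a2 b2 b1"
  show "kmat (choi a1 b1 a2 b2 N) a2 b2 b1 y x = cnj (kmat (choi a1 b1 a2 b2 N) a2 b2 b1 x y)"
    using choi_kernel[OF x y] choi_kernel[OF y x] Jk_herm[OF ch x y] by simp
qed


lemma main_ineq:
  assumes ch: "is_bipartite_channel a1 b1 a2 b2 N" and st: "is_state (lA*a1*b1*lB) \<rho>"
  shows "E_kappa_state (lA*a2) (b2*lB) (ext_id lA lB (a1*b1) (a2*b2) N \<rho>) - E_kappa_state (lA*a1) (b1*lB) \<rho>
     \<le> E_kappa_channel a1 b1 a2 b2 N"
proof -
  define \<sigma> where "\<sigma> = ext_id lA lB (a1*b1) (a2*b2) N \<rho>"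
  define J where "J = choi a1 b1 a2 b2 N"
  define SR where "SR = {Re (tr S) | S. S \<in> carrier_mat ((lA*a1)*(b1*lB)) ((lA*a1)*(b1*lB)) \<and> psd S \<and>
       loewner_le (- ptrans2 (lA*a1) (b1*lB) S) (ptrans2 (lA*a1) (b1*lB) \<rho>) \<and>
       loewner_le (ptrans2 (lA*a1) (b1*lB) \<rho>) (ptrans2 (lA*a1) (b1*lB) S)}"
  define SG where "SG = {Re (tr S) | S. S \<in> carrier_mat ((lA*a2)*(b2*lB)) ((lA*a2)*(b2*lB)) \<and> psd S \<and>
       loewner_le (- ptrans2 (lA*a2) (b2*lB) S) (ptrans2 (lA*a2) (b2*lB) \<sigma>) \<and>
       loewner_le (ptrans2 (lA*a2) (b2*lB) \<sigma>) (ptrans2 (lA*a2) (b2*lB) S)}"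
  define QS where "QS = {opnorm (ptrace_mid a1 (a2*b2) b1 Q) | Q.
        Q \<in> carrier_mat (a1*a2*b2*b1) (a1*a2*b2*b1) \<and> psd Q \<and>
        loewner_le (- ptrans2 (a1*a2) (b2*b1) Q) (ptrans2 (a1*a2) (b2*b1) J) \<and>
        loewner_le (ptrans2 (a1*a2) (b2*b1) J) (ptrans2 (a1*a2) (b2*b1) Q)}"
  have eR: "E_kappa_state (lA*a1) (b1*lB) \<rho> = log 2 (Inf SR)"
    unfolding E_kappa_state_def W_kappa_def SR_def ..
  have eG: "E_kappa_state (lA*a2) (b2*lB) \<sigma> = log 2 (Inf SG)"
    unfolding E_kappa_state_def W_kappa_def SG_def ..
  have eC: "E_kappa_channel a1 b1 a2 b2 N = log 2 (Inf QS)"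
    unfolding E_kappa_channel_def QS_def J_def ..
  have \<rho>c: "\<rho> \<in> carrier_mat (lA*a1*b1*lB) (lA*a1*b1*lB)" and \<rho>p: "psd \<rho>" and tr\<rho>: "tr \<rho> = 1"
    using st unfolding is_state_def by auto
  have \<sigma>c: "\<sigma> \<in> carrier_mat (lA*a2*b2*lB) (lA*a2*b2*lB)"
    unfolding \<sigma>_def ext_id_def by (simp add: mult.assoc)
  have tr\<sigma>: "tr \<sigma> = 1" unfolding \<sigma>_def using tr_sigma[OF ch \<rho>c] tr\<rho> by simp
  have SRne: "SR \<noteq> {}" using state_feasible[OF \<rho>c \<rho>p] unfolding SR_def by blast
  have SRge: "\<And>x. x \<in> SR \<Longrightarrow> 1 \<le> x"
  proof -
    fix x assume "x \<in> SR"
    then obtain S where x: "x = Re (tr S)" and Sc: "S \<in> carrier_mat ((lA*a1)*(b1*lB)) ((lA*a1)*(b1*lB))"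
      and l: "loewner_le (ptrans2 (lA*a1) (b1*lB) \<rho>) (ptrans2 (lA*a1) (b1*lB) S)" unfolding SR_def by blast
    have "Re (tr \<rho>) \<le> Re (tr S)" by (rule feasible_tr_ge[OF \<rho>c _ l]) (use Sc in \<open>simp add: N4_eq\<close>)
    thus "1 \<le> x" using x tr\<rho> by simp
  qed
  have SGge: "\<And>x. x \<in> SG \<Longrightarrow> 1 \<le> x"
  proof -
    fix x assume "x \<in> SG"
    then obtain S where x: "x = Re (tr S)" and Sc: "S \<in> carrier_mat ((lA*a2)*(b2*lB)) ((lA*a2)*(b2*lB))"
      and l: "loewner_le (ptrans2 (lA*a2) (b2*lB) \<sigma>) (ptrans2 (lA*a2) (b2*lB) S)" unfolding SG_def by blast
    have "Re (tr \<sigma>) \<le> Re (tr S)" by (rule feasible_tr_ge[OF \<sigma>c _ l]) (use Sc in \<open>simp add: N4_eq\<close>)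
    thus "1 \<le> x" using x tr\<sigma> by simp
  qed
  have bR: "bdd_below SR" using SRge by (auto simp: bdd_below_def)
  have bG: "bdd_below SG" using SGge by (auto simp: bdd_below_def)
  have QSne: "QS \<noteq> {}" using choi_feasible[OF ch] unfolding QS_def J_def by blast
  have key: "Inf SG \<le> r * x" if r: "r \<in> QS" and x: "x \<in> SR" for r x
  proof -
    from r obtain Q where rQ: "r = opnorm (ptrace_mid a1 (a2*b2) b1 Q)" and
      Qc: "Q \<in> carrier_mat (a1*a2*b2*b1) (a1*a2*b2*b1)" and Qp: "psd Q" and
      Q1: "loewner_le (- ptrans2 (a1*a2) (b2*b1) Q) (ptrans2 (a1*a2) (b2*b1) J)" and
      Q2: "loewner_le (ptrans2 (a1*a2) (b2*b1) J) (ptrans2 (a1*a2) (b2*b1) Q)"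
      unfolding QS_def by blast
    from x obtain S where xS: "x = Re (tr S)" and Sc: "S \<in> carrier_mat ((lA*a1)*(b1*lB)) ((lA*a1)*(b1*lB))" and Sp: "psd S"
      and S1: "loewner_le (- ptrans2 (lA*a1) (b1*lB) S) (ptrans2 (lA*a1) (b1*lB) \<rho>)"
      and S2: "loewner_le (ptrans2 (lA*a1) (b1*lB) \<rho>) (ptrans2 (lA*a1) (b1*lB) S)"
      unfolding SR_def by blast
    note tr = transfer[OF ch \<rho>c Sc Sp S1 S2 Qc Qp Q1[unfolded J_def] Q2[unfolded J_def]]
    have "Re (tr (mk4 lA a2 b2 lB (lnk a1 b1 (kmat S a1 b1 lB) (kmat Q a2 b2 b1)))) \<in> SG"
      unfolding SG_def \<sigma>_def using tr(1-4) by blast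
    hence "Inf SG \<le> Re (tr (mk4 lA a2 b2 lB (lnk a1 b1 (kmat S a1 b1 lB) (kmat Q a2 b2 b1))))"
      by (rule cInf_lower[OF _ bG])
    also have "\<dots> \<le> r * x" using tr(5) rQ xS by simp
    finally show ?thesis .
  qed
  have WG1: "1 \<le> Inf SG"
  proof -
    obtain x where "x \<in> SR" using SRne by blast
    obtain r where "r \<in> QS" using QSne by blast
    from key[OF \<open>r \<in> QS\<close> \<open>x \<in> SR\<close>] have "Inf SG \<le> r * x" .
    have "SG \<noteq> {}"
    proof -
      from \<open>r \<in> QS\<close> obtain Q where
        Qc: "Q \<in> carrier_mat (a1*a2*b2*b1) (a1*a2*b2*b1)" and Qp: "psd Q" and
        Q1: "loewner_le (- ptrans2 (a1*a2) (b2*b1) Q) (ptrans2 (a1*a2) (b2*b1) J)" and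
        Q2: "loewner_le (ptrans2 (a1*a2) (b2*b1) J) (ptrans2 (a1*a2) (b2*b1) Q)"
        unfolding QS_def by blast
      from \<open>x \<in> SR\<close> obtain S where Sc: "S \<in> carrier_mat ((lA*a1)*(b1*lB)) ((lA*a1)*(b1*lB))" and Sp: "psd S"
        and S1: "loewner_le (- ptrans2 (lA*a1) (b1*lB) S) (ptrans2 (lA*a1) (b1*lB) \<rho>)"
        and S2: "loewner_le (ptrans2 (lA*a1) (b1*lB) \<rho>) (ptrans2 (lA*a1) (b1*lB) S)"
        unfolding SR_def by blast
      note tr = transfer[OF ch \<rho>c Sc Sp S1 S2 Qc Qp Q1[unfolded J_def] Q2[unfolded J_def]]
      show ?thesis unfolding SG_def \<sigma>_def using tr(1-4) by blast
    qed
    thus ?thesis using SGge by (intro cInf_greatest) auto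
  qed
  have WR1: "1 \<le> Inf SR" using SRne SRge by (intro cInf_greatest) auto
  have ratio: "Inf SG / Inf SR \<le> r" if r: "r \<in> QS" for r
  proof -
    have rpos: "r > 0"
    proof (rule ccontr)
      assume "\<not> r > 0"
      hence "r \<le> 0" by simp
      obtain x where x: "x \<in> SR" using SRne by blast
      have "Inf SG \<le> r * x" by (rule key[OF r x])
      also have "\<dots> \<le> 0" using \<open>r \<le> 0\<close> SRge[OF x] by (simp add: mult_nonpos_nonneg)
      finally show False using WG1 by simp
    qed
    have "Inf SG / r \<le> Inf SR"
    proof (rule cInf_greatest[OF SRne])
      fix x assume "x \<in> SR"
      hence "Inf SG \<le> r * x" by (rule key[OF r])
      thus "Inf SG / r \<le> x" using rpos by (simp add: divide_le_eq mult.commute)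
    qed
    thus ?thesis using rpos WR1 by (simp add: divide_le_eq field_simps)
  qed
  have bQ: "Inf SG / Inf SR \<le> Inf QS" using QSne ratio by (intro cInf_greatest) auto
  have pos: "0 < Inf SG / Inf SR" using WG1 WR1 by simp
  have "log 2 (Inf SG) - log 2 (Inf SR) = log 2 (Inf SG / Inf SR)"
    using WG1 WR1 by (simp add: log_divide)
  also have "\<dots> \<le> log 2 (Inf QS)" using pos bQ by simp
  finally show ?thesis unfolding eC[symmetric] eG[symmetric] eR[symmetric] \<sigma>_def .
qed


theorem mainTheorem12:
  fixes dA' dB' dA dB :: nat and N :: "complex mat \<Rightarrow> complex mat"
  assumes "is_bipartite_channel dA' dB' dA dB N"
  shows "E_kappa_A_channel dA' dB' dA dB N \<le> ereal (E_kappa_channel dA' dB' dA dB N)"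
  unfolding E_kappa_A_channel_def
proof (rule SUP_least)
  fix p assume "p \<in> {(lA, lB, \<rho>) | lA lB \<rho>. is_state (lA*dA'*dB'*lB) \<rho>}"
  then obtain lA lB \<rho> where p: "p = (lA,lB,\<rho>)" and st: "is_state (lA*dA'*dB'*lB) \<rho>" by blast
  show "(case p of (lA, lB, \<rho>) \<Rightarrow>
          ereal (E_kappa_state (lA*dA) (dB*lB) (ext_id lA lB (dA'*dB') (dA*dB) N \<rho>)
                 - E_kappa_state (lA*dA') (dB'*lB) \<rho>)) \<le> ereal (E_kappa_channel dA' dB' dA dB N)"
    unfolding p using main_ineq[OF assms st] by simp
qed

end
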